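(* Let $\mathcal{O}_{\rm cov}$ be the set of $G$-covariant channels from $A$ to $B$, let $\eta$ be a state of $R$ and $\tau$ a state of $A$. Then $$\Phi_\eta(\tau)=\max_{\mathcal{E}\in\mathcal{O}_{\rm cov}}\mathrm{tr}\big(\eta^T\mathcal{E}(\tau)\big),$$ where the transpose is taken in the fixed orthonormal basis $\{|i\rangle\}$ of $\mathcal{H}_R\cong\mathcal{H}_B$.
   Context: $G$ is a compact group with normalized Haar measure $dg$; finite-dimensional systems $A,B$ carry continuous unitary representations $U_A,U_B$. The reference $R$ has $\mathcal{H}_R$ of dimension $d_B$, identified with $\mathcal{H}_B$ via a fixed orthonormal basis $\{|i\rangle\}$, and carries $U_R(g)=\overline{U_B(g)}$ (entrywise complex conjugate in that basis). A channel $\mathcal{E}$ from $A$ to $B$ is $G$-covariant if $\mathcal{E}(U_A(g)XU_A(g)^\dagger)=U_B(g)\mathcal{E}(X)U_B(g)^\dagger$ for all $g,X$. On $RA$, $\mathcal{G}(M)=\int dg\,(U_R(g)\otimes U_A(g))M(U_R(g)\otimes U_A(g))^\dagger$. $\Phi_\eta(\tau):=\inf_{X\ge0}\{\mathrm{tr}[X]:\mathbb{1}_R\otimes X-\mathcal{G}(\eta\otimes\tau)\ge0\}$ (equivalently $2^{-H_{\min}(R|A)_{\mathcal{G}(\eta\otimes\tau)}}$). *)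

theory Defs
  imports "HOL-Analysis.Analysis" "HOL-Library.Complex_Order"
begin

text \<open>Operators on a finite-dimensional Hilbert space with orthonormal basis indexed by a
  finite type are represented by their matrices in that basis, i.e. functions
  from row index and column index to complex numbers.\<close>

type_synonym ('i, 'j) cmat = "'i \<Rightarrow> 'j \<Rightarrow> complex"

definition mmul :: "('i, 'j::finite) cmat \<Rightarrow> ('j, 'k) cmat \<Rightarrow> ('i, 'k) cmat" where
  "mmul M N = (\<lambda>i k. \<Sum>j\<in>UNIV. M i j * N j k)"

definition madj :: "('i, 'j) cmat \<Rightarrow> ('j, 'i) cmat" where
  "madj M = (\<lambda>i j. cnj (M j i))"

definition mtransp :: "('i, 'j) cmat \<Rightarrow> ('j, 'i) cmat" where
  "mtransp M = (\<lambda>i j. M j i)"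

definition mconj :: "('i, 'j) cmat \<Rightarrow> ('i, 'j) cmat" where
  "mconj M = (\<lambda>i j. cnj (M i j))"

definition madd :: "('i, 'j) cmat \<Rightarrow> ('i, 'j) cmat \<Rightarrow> ('i, 'j) cmat" where
  "madd M N = (\<lambda>i j. M i j + N i j)"

definition msub :: "('i, 'j) cmat \<Rightarrow> ('i, 'j) cmat \<Rightarrow> ('i, 'j) cmat" where
  "msub M N = (\<lambda>i j. M i j - N i j)"

definition mid :: "('i, 'i) cmat" where
  "mid = (\<lambda>i j. if i = j then 1 else 0)"

definition mtr :: "('i::finite, 'i) cmat \<Rightarrow> complex" where
  "mtr M = (\<Sum>i\<in>UNIV. M i i)"

definition mtensor :: "('i, 'j) cmat \<Rightarrow> ('k, 'l) cmat \<Rightarrow> ('i \<times> 'k, 'j \<times> 'l) cmat" where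
  "mtensor M N = (\<lambda>(i, k) (j, l). M i j * N k l)"

definition psd_on :: "'i set \<Rightarrow> ('i, 'i) cmat \<Rightarrow> bool" where
  "psd_on S M \<longleftrightarrow> (\<forall>v :: 'i \<Rightarrow> complex.
      0 \<le> (\<Sum>x\<in>S. \<Sum>y\<in>S. cnj (v x) * M x y * v y))"

definition psd :: "('i::finite, 'i) cmat \<Rightarrow> bool" where
  "psd M \<longleftrightarrow> psd_on UNIV M"

definition is_state :: "('i::finite, 'i) cmat \<Rightarrow> bool" where
  "is_state \<rho> \<longleftrightarrow> psd \<rho> \<and> mtr \<rho> = 1"

definition unitary_mat :: "('i::finite, 'i) cmat \<Rightarrow> bool" where
  "unitary_mat U \<longleftrightarrow> mmul U (madj U) = mid \<and> mmul (madj U) U = mid"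

text \<open>Linear maps between operator spaces, complete positivity (id_n \<otimes> E positive for every
  ancilla dimension n, the ancilla basis being indexed by {..<n}), trace preservation.\<close>
definition linear_map :: "(('a, 'a) cmat \<Rightarrow> ('b, 'b) cmat) \<Rightarrow> bool" where
  "linear_map E \<longleftrightarrow> (\<forall>X Y. E (madd X Y) = madd (E X) (E Y))
     \<and> (\<forall>(c::complex) X. E (\<lambda>i j. c * X i j) = (\<lambda>i j. c * E X i j))"

definition ampl :: "(('a, 'a) cmat \<Rightarrow> ('b, 'b) cmat) \<Rightarrow> (nat \<times> 'a, nat \<times> 'a) cmat
    \<Rightarrow> (nat \<times> 'b, nat \<times> 'b) cmat" where
  "ampl E X = (\<lambda>(k, b) (l, b'). E (\<lambda>a a'. X (k, a) (l, a')) b b')"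

definition completely_positive :: "(('a, 'a) cmat \<Rightarrow> ('b, 'b) cmat) \<Rightarrow> bool" where
  "completely_positive E \<longleftrightarrow> (\<forall>n X. psd_on ({..<n} \<times> UNIV) X \<longrightarrow>
       psd_on ({..<n} \<times> UNIV) (ampl E X))"

definition quantum_channel :: "(('a::finite, 'a) cmat \<Rightarrow> ('b::finite, 'b) cmat) \<Rightarrow> bool" where
  "quantum_channel E \<longleftrightarrow> linear_map E \<and> completely_positive E \<and> (\<forall>X. mtr (E X) = mtr X)"

text \<open>Compact group G (group operation written additively, not assumed commutative)
  with normalized Haar measure mu, and continuous unitary representations.\<close>
definition haar_prob :: "'g::topological_group_add measure \<Rightarrow> bool" where
  "haar_prob \<mu> \<longleftrightarrow> sets \<mu> = sets borel \<and> emeasure \<mu> (space \<mu>) = 1 \<and>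
     (\<forall>g A. A \<in> sets \<mu> \<longrightarrow> emeasure \<mu> ((\<lambda>x. g + x) -` A) = emeasure \<mu> A) \<and>
     (\<forall>g A. A \<in> sets \<mu> \<longrightarrow> emeasure \<mu> ((\<lambda>x. x + g) -` A) = emeasure \<mu> A)"

definition cont_unitary_rep :: "('g::topological_group_add \<Rightarrow> ('i::finite, 'i) cmat) \<Rightarrow> bool" where
  "cont_unitary_rep U \<longleftrightarrow> (\<forall>g. unitary_mat (U g)) \<and> (\<forall>g h. U (g + h) = mmul (U g) (U h))
     \<and> (\<forall>i j. continuous_on UNIV (\<lambda>g. U g i j))"

definition covariant :: "('g \<Rightarrow> ('a::finite, 'a) cmat) \<Rightarrow> ('g \<Rightarrow> ('b::finite, 'b) cmat)
    \<Rightarrow> (('a, 'a) cmat \<Rightarrow> ('b, 'b) cmat) \<Rightarrow> bool" where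
  "covariant UA UB E \<longleftrightarrow> (\<forall>g X. E (mmul (mmul (UA g) X) (madj (UA g)))
        = mmul (mmul (UB g) (E X)) (madj (UB g)))"

text \<open>The twirl on RA, with U_R(g) the entrywise complex conjugate of U_B(g).\<close>
definition twirl :: "'g measure \<Rightarrow> ('g \<Rightarrow> ('a::finite, 'a) cmat) \<Rightarrow> ('g \<Rightarrow> ('b::finite, 'b) cmat)
    \<Rightarrow> ('b \<times> 'a, 'b \<times> 'a) cmat \<Rightarrow> ('b \<times> 'a, 'b \<times> 'a) cmat" where
  "twirl \<mu> UA UB M = (\<lambda>x y. integral\<^sup>L \<mu> (\<lambda>g.
      mmul (mmul (mtensor (mconj (UB g)) (UA g)) M) (madj (mtensor (mconj (UB g)) (UA g))) x y))"

definition Phi :: "'g measure \<Rightarrow> ('g \<Rightarrow> ('a::finite, 'a) cmat) \<Rightarrow> ('g \<Rightarrow> ('b::finite, 'b) cmat)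
    \<Rightarrow> ('b, 'b) cmat \<Rightarrow> ('a, 'a) cmat \<Rightarrow> real" where
  "Phi \<mu> UA UB \<eta> \<tau> = Inf {Re (mtr X) | X. psd X \<and>
      psd (msub (mtensor (mid :: ('b, 'b) cmat) X) (twirl \<mu> UA UB (mtensor \<eta> \<tau>)))}"

end

theory Submission
  imports Defs
begin

lemma sum_UNIV_prod: "(\<Sum>p\<in>(UNIV::('x::finite \<times> 'y::finite) set). f p) = (\<Sum>j\<in>UNIV. \<Sum>l\<in>UNIV. f (j,l))"
  unfolding UNIV_Times_UNIV[symmetric] sum.cartesian_product by (simp only: case_prod_eta)

lemma mmul_assoc: "mmul (mmul A B) C = mmul A (mmul B C)"
proof (intro ext)
  fix i k
  have "mmul (mmul A B) C i k = (\<Sum>j\<in>UNIV. \<Sum>l\<in>UNIV. A i l * B l j * C j k)"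
    unfolding mmul_def sum_distrib_right ..
  also have "\<dots> = (\<Sum>l\<in>UNIV. \<Sum>j\<in>UNIV. A i l * B l j * C j k)"
    by (rule sum.swap)
  also have "\<dots> = mmul A (mmul B C) i k"
    unfolding mmul_def sum_distrib_left by (simp add: mult.assoc)
  finally show "mmul (mmul A B) C i k = mmul A (mmul B C) i k" .
qed

lemma madj_mmul: "madj (mmul A B) = mmul (madj B) (madj A)"
  unfolding mmul_def madj_def by (auto simp: mult.commute)

lemma madj_madj[simp]: "madj (madj A) = A"
  unfolding madj_def by auto

lemma mtensor_mmul: "mmul (mtensor A B) (mtensor C D) = mtensor (mmul A C) (mmul B D)"
proof (intro ext)
  fix x y
  show "mmul (mtensor A B) (mtensor C D) x y = mtensor (mmul A C) (mmul B D) x y"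
    unfolding mmul_def mtensor_def sum_UNIV_prod
    apply (cases x; cases y)
    apply (simp add: sum_distrib_left sum_distrib_right)
    apply (rule sum.swap[THEN trans])
    apply (simp add: mult_ac)
    done
qed

lemma madj_mtensor: "madj (mtensor A B) = mtensor (madj A) (madj B)"
  unfolding madj_def mtensor_def by (auto simp: fun_eq_iff)

lemma mmul_mid_left[simp]: "mmul mid A = A"
  unfolding mmul_def mid_def by (intro ext) (simp add: if_distrib[of "\<lambda>x. x * _"] cong: if_cong)

lemma mmul_mid_right[simp]: "mmul A mid = A"
  unfolding mmul_def mid_def by (intro ext) (simp add: if_distrib[of "\<lambda>x. _ * x"] cong: if_cong)

lemma mtensor_mid: "mtensor mid mid = mid"
  unfolding mtensor_def mid_def by (auto simp: fun_eq_iff)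

lemma madj_mid[simp]: "madj mid = mid"
  unfolding madj_def mid_def by (auto simp: fun_eq_iff)

lemma mconj_mmul: "mconj (mmul A B) = mmul (mconj A) (mconj B)"
  unfolding mconj_def mmul_def by auto

lemma madj_mconj: "madj (mconj A) = mconj (madj A)"
  unfolding mconj_def madj_def by auto

lemma mconj_mid[simp]: "mconj mid = mid"
  unfolding mconj_def mid_def by (auto simp: fun_eq_iff)

lemma unitary_mconj: "unitary_mat U \<Longrightarrow> unitary_mat (mconj U)"
  unfolding unitary_mat_def by (simp add: madj_mconj mconj_mmul[symmetric])


definition qf :: "'i set \<Rightarrow> ('i,'i) cmat \<Rightarrow> ('i \<Rightarrow> complex) \<Rightarrow> complex" where
  "qf S M v = (\<Sum>x\<in>S. \<Sum>y\<in>S. cnj (v x) * M x y * v y)"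

lemma psd_on_qf: "psd_on S M \<longleftrightarrow> (\<forall>v. 0 \<le> qf S M v)"
  unfolding psd_on_def qf_def ..

lemma nonneg_complex_iff: "(0::complex) \<le> z \<longleftrightarrow> Im z = 0 \<and> 0 \<le> Re z"
  by (auto simp: less_eq_complex_def)

lemma qf_restrict:
  fixes v :: "'i \<Rightarrow> complex"
  assumes "finite S" "T \<subseteq> S" "\<forall>y\<in>S-T. v y = 0"
  shows "qf S M v = qf T M v"
proof -
  have "qf S M v = (\<Sum>x\<in>T. \<Sum>y\<in>S. cnj (v x) * M x y * v y)"
    unfolding qf_def using assms by (intro sum.mono_neutral_right) auto
  also have "\<dots> = qf T M v"
    unfolding qf_def
  proof (rule sum.cong[OF refl])
    fix x assume "x \<in> T"
    show "(\<Sum>y\<in>S. cnj (v x) * M x y * v y) = (\<Sum>y\<in>T. cnj (v x) * M x y * v y)"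
      using assms by (intro sum.mono_neutral_right) auto
  qed
  finally show ?thesis .
qed

lemma psd_on_mono: "finite S \<Longrightarrow> T \<subseteq> S \<Longrightarrow> psd_on S M \<Longrightarrow> psd_on T M"
proof (unfold psd_on_qf, intro allI)
  fix v :: "'a \<Rightarrow> complex" assume fin: "finite S" and TS: "T \<subseteq> S" and h: "\<forall>v. 0 \<le> qf S M v"
  let ?w = "\<lambda>y. if y \<in> T then v y else 0"
  have "qf T M v = qf T M ?w" unfolding qf_def by (intro sum.cong refl) auto
  also have "\<dots> = qf S M ?w" using fin TS by (intro qf_restrict[symmetric]) auto
  finally show "0 \<le> qf T M v" using h by simp
qed

lemma qf_two:
  assumes "finite S" "x \<in> S" "z \<in> S" "x \<noteq> z"
  shows "qf S M (\<lambda>y. if y = x then a else if y = z then b else 0) =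
     cnj a * M x x * a + cnj a * M x z * b + cnj b * M z x * a + cnj b * M z z * b"
proof -
  have "qf S M (\<lambda>y. if y = x then a else if y = z then b else 0) =
        qf {x,z} M (\<lambda>y. if y = x then a else if y = z then b else 0)"
    using assms by (intro qf_restrict) auto
  then show ?thesis using assms(4) unfolding qf_def by (simp add: algebra_simps)
qed

lemma qf_one:
  assumes "finite S" "x \<in> S"
  shows "qf S M (\<lambda>y. if y = x then a else 0) = cnj a * M x x * a"
proof -
  have "qf S M (\<lambda>y. if y = x then a else 0) = qf {x} M (\<lambda>y. if y = x then a else 0)"
    using assms by (intro qf_restrict) auto
  then show ?thesis unfolding qf_def by simp
qed

lemma psd_on_diag: "finite S \<Longrightarrow> psd_on S M \<Longrightarrow> x \<in> S \<Longrightarrow> 0 \<le> M x x"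
  using qf_one[of S x M 1] unfolding psd_on_qf by (metis complex_cnj_one mult_1 mult_1_right)

lemma real_lin_zero: assumes "\<forall>t::real. 0 \<le> t * c + d" shows "c = 0"
proof (rule ccontr)
  assume "c \<noteq> 0"
  then have "(- (\<bar>d\<bar> + 1) / c) * c + d = - (\<bar>d\<bar> + 1) + d" by simp
  moreover have "0 \<le> (- (\<bar>d\<bar> + 1) / c) * c + d" using assms by blast
  ultimately show False by linarith
qed

lemma psd_on_herm:
  assumes fin: "finite S" and p: "psd_on S M" and xS: "x \<in> S" and zS: "z \<in> S"
  shows "M z x = cnj (M x z)"
proof (cases "x = z")
  case True
  then show ?thesis using psd_on_diag[OF fin p xS] by (auto simp: nonneg_complex_iff complex_eq_iff)
next
  case False
  have dx: "Im (M x x) = 0" and dz: "Im (M z z) = 0"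
    using psd_on_diag[OF fin p xS] psd_on_diag[OF fin p zS] by (auto simp: nonneg_complex_iff)
  have "0 \<le> qf S M (\<lambda>y. if y = x then 1 else if y = z then 1 else 0)" using p by (simp add: psd_on_qf)
  then have h1: "Im (M x z + M z x) = 0"
    using dx dz by (simp add: qf_two[OF fin xS zS False] nonneg_complex_iff)
  have "0 \<le> qf S M (\<lambda>y. if y = x then 1 else if y = z then \<i> else 0)" using p by (simp add: psd_on_qf)
  then have h2: "Re (M x z - M z x) = 0"
    using dx dz by (simp add: qf_two[OF fin xS zS False] nonneg_complex_iff)
  show ?thesis using h1 h2 by (simp add: complex_eq_iff)
qed

lemma psd_on_zero_row:
  assumes fin: "finite S" and p: "psd_on S M" and sS: "s \<in> S" and yS: "y \<in> S" and z: "M s s = 0"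
  shows "M s y = 0"
proof (cases "y = s")
  case True then show ?thesis using z by simp
next
  case False
  have hy: "M y s = cnj (M s y)" using psd_on_herm[OF fin p sS yS] .
  have dy: "Im (M y y) = 0" using psd_on_diag[OF fin p yS] by (auto simp: nonneg_complex_iff)
  have "\<forall>t::real. 0 \<le> t * (2 * Re (M s y)) + Re (M y y)"
  proof
    fix t :: real
    have "0 \<le> qf S M (\<lambda>w. if w = s then complex_of_real t else if w = y then 1 else 0)"
      using p by (simp add: psd_on_qf)
    moreover have "Re (qf S M (\<lambda>w. if w = s then complex_of_real t else if w = y then 1 else 0)) = t * (2 * Re (M s y)) + Re (M y y)"
      using z hy False by (simp add: qf_two[OF fin sS yS] algebra_simps)
    ultimately show "0 \<le> t * (2 * Re (M s y)) + Re (M y y)"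
      by (simp add: nonneg_complex_iff)
  qed
  then have r: "Re (M s y) = 0" using real_lin_zero by fastforce
  have "\<forall>t::real. 0 \<le> t * (2 * Im (M s y)) + Re (M y y)"
  proof
    fix t :: real
    have "0 \<le> qf S M (\<lambda>w. if w = s then \<i> * complex_of_real t else if w = y then 1 else 0)"
      using p by (simp add: psd_on_qf)
    moreover have "Re (qf S M (\<lambda>w. if w = s then \<i> * complex_of_real t else if w = y then 1 else 0)) = t * (2 * Im (M s y)) + Re (M y y)"
      using z hy False by (simp add: qf_two[OF fin sS yS] algebra_simps)
    ultimately show "0 \<le> t * (2 * Im (M s y)) + Re (M y y)"
      by (simp add: nonneg_complex_iff)
  qed
  then have i: "Im (M s y) = 0" using real_lin_zero by fastforce
  show ?thesis using r i by (simp add: complex_eq_iff)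
qed


lemma sum_insert2:
  assumes "finite S" "s \<notin> S"
  shows "(\<Sum>x\<in>insert s S. \<Sum>y\<in>insert s S. f x y) =
    f s s + (\<Sum>y\<in>S. f s y) + (\<Sum>x\<in>S. f x s) + (\<Sum>x\<in>S. \<Sum>y\<in>S. f x y)"
  using assms by (simp add: sum.insert sum.distrib algebra_simps)

lemma psd_step:
  fixes M :: "('i,'i) cmat" and r :: real
  assumes fin: "finite S" and sS: "s \<notin> S" and p: "psd_on (insert s S) M"
    and r: "r > 0" and css: "M s s = complex_of_real (r * r)"
  shows "psd_on S (\<lambda>x y. M x y - (M x s / r) * cnj (M y s / r))"
proof (unfold psd_on_qf, intro allI)
  fix v :: "'i \<Rightarrow> complex"
  define \<beta> where "\<beta> = (\<Sum>y\<in>S. M s y * v y)"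
  define \<alpha> where "\<alpha> = - \<beta> / complex_of_real (r * r)"
  define v' where "v' = (\<lambda>x. if x = s then \<alpha> else v x)"
  have fin': "finite (insert s S)" using fin by simp
  have herm: "\<And>x y. x \<in> insert s S \<Longrightarrow> y \<in> insert s S \<Longrightarrow> M y x = cnj (M x y)"
    using psd_on_herm[OF fin' p] by blast
  have v'S: "\<And>x. x \<in> S \<Longrightarrow> v' x = v x" using sS unfolding v'_def by auto
  define q where "q = qf S M v"
  have b2: "(\<Sum>x\<in>S. cnj (v x) * M x s) = cnj \<beta>"
    unfolding \<beta>_def cnj_sum
  proof (rule sum.cong[OF refl])
    fix x assume "x \<in> S"
    then show "cnj (v x) * M x s = cnj (M s x * v x)" using herm[of s x] by (simp add: mult.commute)
  qed
  have "qf (insert s S) M v' = cnj \<alpha> * M s s * \<alpha> + cnj \<alpha> * \<beta> + cnj \<beta> * \<alpha> + q"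
  proof -
    have "qf (insert s S) M v' = cnj (v' s) * M s s * v' s + (\<Sum>y\<in>S. cnj (v' s) * M s y * v' y)
       + (\<Sum>x\<in>S. cnj (v' x) * M x s * v' s) + (\<Sum>x\<in>S. \<Sum>y\<in>S. cnj (v' x) * M x y * v' y)"
      unfolding qf_def by (rule sum_insert2[OF fin sS])
    also have "\<dots> = cnj \<alpha> * M s s * \<alpha> + (\<Sum>y\<in>S. cnj \<alpha> * (M s y * v y))
       + (\<Sum>x\<in>S. cnj (v x) * M x s * \<alpha>) + q"
      unfolding q_def qf_def using v'S by (simp add: v'_def mult.assoc)
    also have "\<dots> = cnj \<alpha> * M s s * \<alpha> + cnj \<alpha> * \<beta> + cnj \<beta> * \<alpha> + q"
      by (simp add: \<beta>_def sum_distrib_left sum_distrib_right[symmetric] b2)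
    finally show ?thesis .
  qed
  also have "\<dots> = q - \<beta> * cnj \<beta> / complex_of_real (r * r)"
    using r unfolding \<alpha>_def css by (simp add: field_simps)
  finally have e1: "qf (insert s S) M v' = q - \<beta> * cnj \<beta> / complex_of_real (r * r)" .
  have e2: "qf S (\<lambda>x y. M x y - (M x s / r) * cnj (M y s / r)) v =
      q - (\<Sum>x\<in>S. cnj (v x) * (M x s / r)) * (\<Sum>y\<in>S. cnj (M y s / r) * v y)"
    unfolding q_def qf_def
    by (simp add: algebra_simps sum_subtractf sum_distrib_left sum_distrib_right)
  have e3: "(\<Sum>y\<in>S. cnj (M y s / r) * v y) = \<beta> / r"
    unfolding \<beta>_def sum_divide_distrib
  proof (rule sum.cong[OF refl])
    fix y assume "y \<in> S"
    then show "cnj (M y s / r) * v y = M s y * v y / r" using herm[of s y] by simp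
  qed
  have e4: "(\<Sum>x\<in>S. cnj (v x) * (M x s / r)) = cnj \<beta> / r"
    using b2 by (simp add: sum_divide_distrib[symmetric])
  have "qf S (\<lambda>x y. M x y - (M x s / r) * cnj (M y s / r)) v = qf (insert s S) M v'"
    unfolding e1 e2 e3 e4 using r by (simp add: field_simps)
  then show "0 \<le> qf S (\<lambda>x y. M x y - (M x s / r) * cnj (M y s / r)) v"
    using p by (simp add: psd_on_qf)
qed

lemma psd_decomp:
  fixes M :: "('i,'i) cmat"
  assumes "finite S" "psd_on S M"
  shows "\<exists>(w::nat \<Rightarrow> 'i \<Rightarrow> complex) m. \<forall>x\<in>S. \<forall>y\<in>S. M x y = (\<Sum>k<m. w k x * cnj (w k y))"
  using assms
proof (induction S arbitrary: M rule: finite_induct)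
  case empty
  then show ?case by auto
next
  case (insert s S M)
  have fin': "finite (insert s S)" using insert by simp
  have pS: "psd_on S M" using psd_on_mono[OF fin' _ insert.prems] by blast
  have d: "0 \<le> M s s" using psd_on_diag[OF fin' insert.prems] by simp
  show ?case
  proof (cases "M s s = 0")
    case True
    obtain w :: "nat \<Rightarrow> 'i \<Rightarrow> complex" and m where wm: "\<forall>x\<in>S. \<forall>y\<in>S. M x y = (\<Sum>k<m. w k x * cnj (w k y))"
      using insert.IH[OF pS] by blast
    define w' where "w' = (\<lambda>k x. if x = s then 0 else w k x)"
    have row: "\<And>y. y \<in> insert s S \<Longrightarrow> M s y = 0"
      using psd_on_zero_row[OF fin' insert.prems _ _ True] by blast
    have col: "\<And>y. y \<in> insert s S \<Longrightarrow> M y s = 0"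
      using row psd_on_herm[OF fin' insert.prems] by (metis complex_cnj_zero insertI1)
    have "\<forall>x\<in>insert s S. \<forall>y\<in>insert s S. M x y = (\<Sum>k<m. w' k x * cnj (w' k y))"
    proof (intro ballI)
      fix x y assume x: "x \<in> insert s S" and y: "y \<in> insert s S"
      show "M x y = (\<Sum>k<m. w' k x * cnj (w' k y))"
      proof (cases "x = s \<or> y = s")
        case True
        then show ?thesis using row[OF y] col[OF x] by (auto simp: w'_def)
      next
        case False
        then show ?thesis using x y wm by (auto simp: w'_def)
      qed
    qed
    then show ?thesis by blast
  next
    case False
    define r where "r = sqrt (Re (M s s))"
    have rpos: "r > 0" using d False unfolding r_def
      by (auto simp: nonneg_complex_iff complex_eq_iff)
    have css: "M s s = complex_of_real (r * r)"
      using d unfolding r_def by (auto simp: nonneg_complex_iff complex_eq_iff)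
    define u where "u = (\<lambda>x. M x s / r)"
    have p': "psd_on S (\<lambda>x y. M x y - u x * cnj (u y))"
      unfolding u_def by (rule psd_step[OF insert.hyps(1,2) insert.prems rpos css])
    obtain w :: "nat \<Rightarrow> 'i \<Rightarrow> complex" and m where wm: "\<forall>x\<in>S. \<forall>y\<in>S. M x y - u x * cnj (u y) = (\<Sum>k<m. w k x * cnj (w k y))"
      using insert.IH[OF p'] by blast
    define w' where "w' = (\<lambda>k x. if k < m then (if x = s then 0 else w k x) else u x)"
    have herm: "\<And>x y. x \<in> insert s S \<Longrightarrow> y \<in> insert s S \<Longrightarrow> M y x = cnj (M x y)"
      using psd_on_herm[OF fin' insert.prems] by blast
    have us: "u s = r" unfolding u_def css using rpos by simp
    have "\<forall>x\<in>insert s S. \<forall>y\<in>insert s S. M x y = (\<Sum>k<Suc m. w' k x * cnj (w' k y))"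
    proof (intro ballI)
      fix x y assume x: "x \<in> insert s S" and y: "y \<in> insert s S"
      have split: "(\<Sum>k<Suc m. w' k x * cnj (w' k y)) = (\<Sum>k<m. w' k x * cnj (w' k y)) + u x * cnj (u y)"
        by (simp add: w'_def)
      show "M x y = (\<Sum>k<Suc m. w' k x * cnj (w' k y))"
      proof (cases "x = s \<or> y = s")
        case True
        then have "(\<Sum>k<m. w' k x * cnj (w' k y)) = 0" by (auto simp: w'_def)
        moreover have "M x y = u x * cnj (u y)"
        proof (cases "x = s")
          case True
          then show ?thesis using us herm[OF y, of s] rpos by (simp add: u_def)
        next
          case False
          then have "y = s" using \<open>x = s \<or> y = s\<close> by simp
          then show ?thesis using us rpos by (simp add: u_def)
        qed
        ultimately show ?thesis using split by simp
      next
        case False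
        then have "x \<in> S" "y \<in> S" using x y by auto
        then have "(\<Sum>k<m. w' k x * cnj (w' k y)) = M x y - u x * cnj (u y)"
          using wm False by (auto simp: w'_def)
        then show ?thesis using split by simp
      qed
    qed
    then show ?thesis by blast
  qed
qed

lemma psd_decomp_UNIV:
  fixes M :: "('i::finite,'i) cmat"
  assumes "psd M"
  shows "\<exists>(w::nat \<Rightarrow> 'i \<Rightarrow> complex) m. M = (\<lambda>x y. \<Sum>k<m. w k x * cnj (w k y))"
  using psd_decomp[of UNIV M] assms unfolding psd_def by (auto simp: fun_eq_iff)


definition col :: "('i \<Rightarrow> complex) \<Rightarrow> ('i, unit) cmat" where
  "col v = (\<lambda>i _. v i)"

lemma of_real_nonneg_c: "0 \<le> r \<Longrightarrow> (0::complex) \<le> complex_of_real r"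
  by (simp add: nonneg_complex_iff)

lemma qf_mat: "qf UNIV M v = mmul (mmul (madj (col v)) M) (col v) u u"
  unfolding qf_def mmul_def madj_def col_def
  by (simp add: sum_distrib_right sum_distrib_left mult.assoc) (rule sum.swap)

lemma psd_conj:
  fixes W :: "('j::finite, 'i::finite) cmat"
  assumes "psd M"
  shows "psd (mmul (mmul W M) (madj W))"
  unfolding psd_def psd_on_qf
proof
  fix v :: "'j \<Rightarrow> complex"
  define w where "w = (\<lambda>i. mmul (madj W) (col v) i ())"
  have cw: "col w = mmul (madj W) (col v)" unfolding w_def col_def by (auto simp: fun_eq_iff)
  have "qf UNIV (mmul (mmul W M) (madj W)) v = mmul (mmul (madj (col v)) (mmul (mmul W M) (madj W))) (col v) () ()"
    by (rule qf_mat)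
  also have "\<dots> = mmul (mmul (madj (col w)) M) (col w) () ()"
    unfolding cw madj_mmul madj_madj mmul_assoc ..
  also have "\<dots> = qf UNIV M w" by (rule qf_mat[symmetric])
  finally show "0 \<le> qf UNIV (mmul (mmul W M) (madj W)) v"
    using assms unfolding psd_def psd_on_qf by simp
qed

lemma psd_sum_rank1:
  fixes w :: "'k \<Rightarrow> 'i::finite \<Rightarrow> complex"
  shows "psd (\<lambda>x y. \<Sum>k\<in>J. w k x * cnj (w k y))"
  unfolding psd_def psd_on_qf
proof
  fix v :: "'i \<Rightarrow> complex"
  define z where "z = (\<lambda>k. \<Sum>x\<in>UNIV. cnj (v x) * w k x)"
  have "qf UNIV (\<lambda>x y. \<Sum>k\<in>J. w k x * cnj (w k y)) v =
     (\<Sum>x\<in>UNIV. \<Sum>y\<in>UNIV. \<Sum>k\<in>J. cnj (v x) * w k x * (cnj (w k y) * v y))"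
    unfolding qf_def by (simp add: sum_distrib_left sum_distrib_right mult_ac)
  also have "\<dots> = (\<Sum>x\<in>UNIV. \<Sum>k\<in>J. \<Sum>y\<in>UNIV. cnj (v x) * w k x * (cnj (w k y) * v y))"
    by (rule sum.cong[OF refl], rule sum.swap)
  also have "\<dots> = (\<Sum>k\<in>J. \<Sum>x\<in>UNIV. \<Sum>y\<in>UNIV. cnj (v x) * w k x * (cnj (w k y) * v y))"
    by (rule sum.swap)
  also have "\<dots> = (\<Sum>k\<in>J. z k * cnj (z k))"
    unfolding z_def cnj_sum sum_product by (simp add: mult_ac)
  also have "\<dots> = (\<Sum>k\<in>J. complex_of_real ((cmod (z k))\<^sup>2))"
    by (rule sum.cong[OF refl]) (rule complex_norm_square[symmetric])
  also have "\<dots> = complex_of_real (\<Sum>k\<in>J. (cmod (z k))\<^sup>2)" by (rule of_real_sum[symmetric])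
  finally show "0 \<le> qf UNIV (\<lambda>x y. \<Sum>k\<in>J. w k x * cnj (w k y)) v"
    by (simp only: of_real_nonneg_c sum_nonneg zero_le_power2)
qed

lemma psd_iff_decomp:
  fixes M :: "('i::finite,'i) cmat"
  shows "psd M \<longleftrightarrow> (\<exists>(w::nat \<Rightarrow> 'i \<Rightarrow> complex) m. M = (\<lambda>x y. \<Sum>k<m. w k x * cnj (w k y)))"
proof
  assume "psd M" then show "\<exists>(w::nat \<Rightarrow> 'i \<Rightarrow> complex) m. M = (\<lambda>x y. \<Sum>k<m. w k x * cnj (w k y))"
    by (rule psd_decomp_UNIV)
next
  assume "\<exists>(w::nat \<Rightarrow> 'i \<Rightarrow> complex) m. M = (\<lambda>x y. \<Sum>k<m. w k x * cnj (w k y))"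
  then show "psd M" using psd_sum_rank1 by blast
qed

lemma psd_add: "psd A \<Longrightarrow> psd B \<Longrightarrow> psd (madd A B)"
proof -
  assume a: "psd A" and b: "psd B"
  show ?thesis unfolding psd_def psd_on_qf
  proof
    fix v :: "'a \<Rightarrow> complex"
    have "qf UNIV (madd A B) v = qf UNIV A v + qf UNIV B v"
      unfolding qf_def madd_def by (simp add: distrib_left distrib_right sum.distrib)
    then show "0 \<le> qf UNIV (madd A B) v" using a b unfolding psd_def psd_on_qf
      by (simp add: add_nonneg_nonneg)
  qed
qed

lemma psd_scale: "psd A \<Longrightarrow> 0 \<le> c \<Longrightarrow> psd (\<lambda>x y. complex_of_real c * A x y)"
proof -
  assume a: "psd A" and c: "0 \<le> c"
  show ?thesis unfolding psd_def psd_on_def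
  proof
    fix v :: "'a \<Rightarrow> complex"
    have "(\<Sum>x\<in>UNIV. \<Sum>y\<in>UNIV. cnj (v x) * (complex_of_real c * A x y) * v y)
        = complex_of_real c * (\<Sum>x\<in>UNIV. \<Sum>y\<in>UNIV. cnj (v x) * A x y * v y)"
      by (simp add: sum_distrib_left mult_ac)
    moreover have "0 \<le> (\<Sum>x\<in>UNIV. \<Sum>y\<in>UNIV. cnj (v x) * A x y * v y)"
      using a unfolding psd_def psd_on_def by blast
    ultimately show "0 \<le> (\<Sum>x\<in>UNIV. \<Sum>y\<in>UNIV. cnj (v x) * (complex_of_real c * A x y) * v y)"
      using c by (simp add: nonneg_complex_iff)
  qed
qed

lemma psd_herm: "psd A \<Longrightarrow> A y x = cnj (A x y)"
  unfolding psd_def using psd_on_herm[of UNIV A x y] by simp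

lemma psd_diag: "psd A \<Longrightarrow> 0 \<le> A x x"
  unfolding psd_def using psd_on_diag[of UNIV A x] by simp

lemma mtr_mmul_psd:
  fixes P Q :: "('i::finite,'i) cmat"
  assumes "psd P" "psd Q"
  shows "0 \<le> mtr (mmul P Q)"
proof -
  obtain w :: "nat \<Rightarrow> 'i \<Rightarrow> complex" and m where Q: "Q = (\<lambda>x y. \<Sum>k<m. w k x * cnj (w k y))"
    using assms(2) psd_iff_decomp by blast
  have "mtr (mmul P Q) = (\<Sum>x\<in>UNIV. \<Sum>y\<in>UNIV. \<Sum>k<m. P x y * w k y * cnj (w k x))"
    unfolding Q mtr_def mmul_def by (simp add: sum_distrib_left mult_ac)
  also have "\<dots> = (\<Sum>x\<in>UNIV. \<Sum>k<m. \<Sum>y\<in>UNIV. P x y * w k y * cnj (w k x))"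
    by (rule sum.cong[OF refl], rule sum.swap)
  also have "\<dots> = (\<Sum>k<m. \<Sum>x\<in>UNIV. \<Sum>y\<in>UNIV. P x y * w k y * cnj (w k x))"
    by (rule sum.swap)
  also have "\<dots> = (\<Sum>k<m. qf UNIV P (w k))"
    unfolding qf_def by (simp add: mult_ac)
  also have "0 \<le> \<dots>" using assms(1) unfolding psd_def psd_on_qf by (simp add: sum_nonneg)
  finally show ?thesis .
qed


lemma sum_prod_fs: "(\<Sum>p\<in>A\<times>B. f (fst p) (snd p)) = (\<Sum>i\<in>A. \<Sum>j\<in>B. f i j)"
  by (simp add: sum.cartesian_product split_def)

lemma psd_mtensor:
  fixes A :: "('i::finite,'i) cmat" and B :: "('j::finite,'j) cmat"
  assumes "psd A" "psd B"
  shows "psd (mtensor A B)"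
proof -
  obtain a :: "nat \<Rightarrow> 'i \<Rightarrow> complex" and m where A: "A = (\<lambda>x y. \<Sum>k<m. a k x * cnj (a k y))"
    using assms(1) psd_iff_decomp by blast
  obtain b :: "nat \<Rightarrow> 'j \<Rightarrow> complex" and n where B: "B = (\<lambda>x y. \<Sum>k<n. b k x * cnj (b k y))"
    using assms(2) psd_iff_decomp by blast
  define w where "w = (\<lambda>(p::nat\<times>nat) (x::'i\<times>'j). a (fst p) (fst x) * b (snd p) (snd x))"
  have "mtensor A B = (\<lambda>x y. \<Sum>p\<in>{..<m}\<times>{..<n}. w p x * cnj (w p y))"
  proof (intro ext)
    fix x y :: "'i \<times> 'j"
    show "mtensor A B x y = (\<Sum>p\<in>{..<m}\<times>{..<n}. w p x * cnj (w p y))"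
    proof (cases x; cases y)
      fix i j i' j' assume xy: "x = (i, j)" "y = (i', j')"
      have "(\<Sum>p\<in>{..<m}\<times>{..<n}. w p x * cnj (w p y)) =
         (\<Sum>k\<in>{..<m}. \<Sum>l\<in>{..<n}. (a k i * cnj (a k i')) * (b l j * cnj (b l j')))"
        unfolding w_def xy by (subst sum_prod_fs[symmetric]) (simp add: mult_ac)
      also have "\<dots> = mtensor A B x y"
        unfolding A B mtensor_def xy sum_product by simp
      finally show ?thesis by simp
    qed
  qed
  then show ?thesis using psd_sum_rank1[of w "{..<m}\<times>{..<n}"] by simp
qed

definition ptrR :: "('b::finite \<times> 'a, 'b \<times> 'a) cmat \<Rightarrow> ('a, 'a) cmat" where
  "ptrR Y = (\<lambda>a' a. \<Sum>b\<in>UNIV. Y (b, a') (b, a))"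

definition chan :: "('b::finite \<times> 'a::finite, 'b \<times> 'a) cmat \<Rightarrow> ('a, 'a) cmat \<Rightarrow> ('b, 'b) cmat" where
  "chan Y X = (\<lambda>b b'. \<Sum>a\<in>UNIV. \<Sum>a'\<in>UNIV. X a a' * Y (b', a') (b, a))"

lemma delta_sum2:
  fixes f :: "'b::finite \<Rightarrow> 'c::finite \<Rightarrow> 'z::comm_monoid_add"
  shows "(\<Sum>b'\<in>UNIV. \<Sum>a'\<in>UNIV. if b = b' then f b' a' else 0) = (\<Sum>a'\<in>UNIV. f b a')"
proof -
  have "(\<Sum>b'\<in>UNIV. \<Sum>a'\<in>UNIV. if b = b' then f b' a' else 0) = (\<Sum>b'\<in>UNIV. if b = b' then (\<Sum>a'\<in>UNIV. f b' a') else 0)"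
    by (rule sum.cong) auto
  also have "\<dots> = (\<Sum>a'\<in>UNIV. f b a')" by simp
  finally show ?thesis .
qed

lemma mtr_tensor_mid:
  fixes X :: "('a::finite,'a) cmat" and Y :: "('b::finite \<times> 'a, 'b \<times> 'a) cmat"
  shows "mtr (mmul (mtensor (mid::('b,'b) cmat) X) Y) = mtr (mmul X (ptrR Y))"
proof -
  have "mtr (mmul (mtensor (mid::('b,'b) cmat) X) Y) =
     (\<Sum>b\<in>UNIV. \<Sum>a\<in>UNIV. \<Sum>b'\<in>UNIV. \<Sum>a'\<in>UNIV. (if b = b' then 1 else 0) * X a a' * Y (b', a') (b, a))"
    unfolding mtr_def mmul_def mtensor_def mid_def sum_UNIV_prod by simp
  also have "\<dots> = (\<Sum>b\<in>UNIV. \<Sum>a\<in>UNIV. \<Sum>a'\<in>UNIV. X a a' * Y (b, a') (b, a))"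
  proof (rule sum.cong[OF refl], rule sum.cong[OF refl])
    fix b a
    have "(\<Sum>b'\<in>UNIV. \<Sum>a'\<in>UNIV. (if b = b' then 1 else 0) * X a a' * Y (b', a') (b, a))
       = (\<Sum>b'\<in>UNIV. \<Sum>a'\<in>UNIV. if b = b' then X a a' * Y (b', a') (b, a) else 0)"
      by (intro sum.cong refl) simp
    also have "\<dots> = (\<Sum>a'\<in>UNIV. X a a' * Y (b, a') (b, a))"
      by (rule delta_sum2)
    finally show "(\<Sum>b'\<in>UNIV. \<Sum>a'\<in>UNIV. (if b = b' then 1 else 0) * X a a' * Y (b', a') (b, a))
       = (\<Sum>a'\<in>UNIV. X a a' * Y (b, a') (b, a))" .
  qed
  also have "\<dots> = (\<Sum>a\<in>UNIV. \<Sum>b\<in>UNIV. \<Sum>a'\<in>UNIV. X a a' * Y (b, a') (b, a))"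
    by (rule sum.swap)
  also have "\<dots> = (\<Sum>a\<in>UNIV. \<Sum>a'\<in>UNIV. \<Sum>b\<in>UNIV. X a a' * Y (b, a') (b, a))"
    by (rule sum.cong[OF refl], rule sum.swap)
  also have "\<dots> = mtr (mmul X (ptrR Y))"
    unfolding mtr_def mmul_def ptrR_def by (simp add: sum_distrib_left)
  finally show ?thesis .
qed

lemma mtr_mid_mul: "mtr (mmul X mid) = mtr X" by simp

lemma mtr_msub: "mtr (mmul (msub A B) C) = mtr (mmul A C) - mtr (mmul B C)"
  unfolding mtr_def mmul_def msub_def by (simp add: algebra_simps sum_subtractf)

lemma weak_dual:
  fixes X :: "('a::finite,'a) cmat" and Y \<rho> :: "('b::finite \<times> 'a, 'b \<times> 'a) cmat"
  assumes "psd (msub (mtensor (mid::('b,'b) cmat) X) \<rho>)" "psd Y" "ptrR Y = mid"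
  shows "Re (mtr (mmul \<rho> Y)) \<le> Re (mtr X)"
proof -
  have "0 \<le> mtr (mmul (msub (mtensor (mid::('b,'b) cmat) X) \<rho>) Y)"
    by (rule mtr_mmul_psd[OF assms(1,2)])
  also have "\<dots> = mtr X - mtr (mmul \<rho> Y)"
    unfolding mtr_msub mtr_tensor_mid assms(3) by simp
  finally show ?thesis by (simp add: nonneg_complex_iff)
qed

lemma mtr_transp_chan:
  fixes \<eta> :: "('b::finite,'b) cmat" and \<tau> :: "('a::finite,'a) cmat"
  shows "mtr (mmul (mtransp \<eta>) (chan Y \<tau>)) = mtr (mmul (mtensor \<eta> \<tau>) Y)"
proof -
  have "mtr (mmul (mtensor \<eta> \<tau>) Y) = (\<Sum>b\<in>UNIV. \<Sum>a\<in>UNIV. \<Sum>b'\<in>UNIV. \<Sum>a'\<in>UNIV. \<eta> b b' * \<tau> a a' * Y (b', a') (b, a))"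
    unfolding mtr_def mmul_def mtensor_def sum_UNIV_prod by simp
  also have "\<dots> = (\<Sum>b\<in>UNIV. \<Sum>b'\<in>UNIV. \<Sum>a\<in>UNIV. \<Sum>a'\<in>UNIV. \<eta> b b' * \<tau> a a' * Y (b', a') (b, a))"
    by (rule sum.cong[OF refl], rule sum.swap)
  also have "\<dots> = mtr (mmul (mtransp \<eta>) (chan Y \<tau>))"
    unfolding mtr_def mmul_def mtransp_def chan_def
    by (subst sum.swap) (simp add: sum_distrib_left mult_ac)
  finally show ?thesis by simp
qed


lemma psd_on_cong: "(\<And>q p. q \<in> T \<Longrightarrow> p \<in> T \<Longrightarrow> M q p = M' q p) \<Longrightarrow> psd_on T M \<longleftrightarrow> psd_on T M'"
  unfolding psd_on_def by (simp cong: sum.cong)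

lemma psd_on_sum:
  assumes "finite J" "\<And>j. j \<in> J \<Longrightarrow> psd_on T (M j)"
  shows "psd_on T (\<lambda>q p. \<Sum>j\<in>J. M j q p)"
  unfolding psd_on_qf
proof
  fix v
  have "qf T (\<lambda>q p. \<Sum>j\<in>J. M j q p) v = (\<Sum>j\<in>J. qf T (M j) v)"
    unfolding qf_def by (simp add: sum_distrib_left sum_distrib_right) (subst sum.swap, rule sum.cong[OF refl], subst sum.swap, simp)
  also have "0 \<le> \<dots>" using assms(2) unfolding psd_on_qf by (simp add: sum_nonneg)
  finally show "0 \<le> qf T (\<lambda>q p. \<Sum>j\<in>J. M j q p) v" .
qed

lemma psd_on_conj:
  fixes K :: "'q \<Rightarrow> 's \<Rightarrow> complex"
  assumes "psd_on S X"
  shows "psd_on T (\<lambda>q p. \<Sum>s\<in>S. \<Sum>s'\<in>S. K q s * X s s' * cnj (K p s'))"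
  unfolding psd_on_qf
proof
  fix v :: "'q \<Rightarrow> complex"
  define u where "u = (\<lambda>s'. \<Sum>p\<in>T. cnj (K p s') * v p)"
  have cu: "cnj (u s) = (\<Sum>q\<in>T. cnj (v q) * K q s)" for s
    unfolding u_def by (simp add: mult.commute)
  have "qf T (\<lambda>q p. \<Sum>s\<in>S. \<Sum>s'\<in>S. K q s * X s s' * cnj (K p s')) v =
      (\<Sum>q\<in>T. \<Sum>p\<in>T. \<Sum>s\<in>S. \<Sum>s'\<in>S. (cnj (v q) * K q s) * X s s' * (cnj (K p s') * v p))"
    unfolding qf_def by (simp add: sum_distrib_left sum_distrib_right mult_ac)
  also have "\<dots> = (\<Sum>q\<in>T. \<Sum>s\<in>S. \<Sum>p\<in>T. \<Sum>s'\<in>S. (cnj (v q) * K q s) * X s s' * (cnj (K p s') * v p))"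
    by (rule sum.cong[OF refl], rule sum.swap)
  also have "\<dots> = (\<Sum>s\<in>S. \<Sum>q\<in>T. \<Sum>p\<in>T. \<Sum>s'\<in>S. (cnj (v q) * K q s) * X s s' * (cnj (K p s') * v p))"
    by (rule sum.swap)
  also have "\<dots> = (\<Sum>s\<in>S. \<Sum>q\<in>T. \<Sum>s'\<in>S. \<Sum>p\<in>T. (cnj (v q) * K q s) * X s s' * (cnj (K p s') * v p))"
    by (rule sum.cong[OF refl], rule sum.cong[OF refl], rule sum.swap)
  also have "\<dots> = (\<Sum>s\<in>S. \<Sum>s'\<in>S. \<Sum>q\<in>T. \<Sum>p\<in>T. (cnj (v q) * K q s) * X s s' * (cnj (K p s') * v p))"
    by (rule sum.cong[OF refl], rule sum.swap)
  also have "\<dots> = qf S X u"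
    unfolding qf_def cu unfolding u_def by (simp add: sum_distrib_left sum_distrib_right mult_ac)
  finally show "0 \<le> qf T (\<lambda>q p. \<Sum>s\<in>S. \<Sum>s'\<in>S. K q s * X s s' * cnj (K p s')) v"
    using assms unfolding psd_on_qf by simp
qed

lemma chan_linear: "linear_map (chan Y)"
  unfolding linear_map_def chan_def madd_def
  by (simp add: distrib_right sum.distrib sum_distrib_left mult.assoc)

lemma chan_tp:
  assumes "ptrR Y = mid"
  shows "mtr (chan Y X) = mtr X"
proof -
  have "mtr (chan Y X) = (\<Sum>b\<in>UNIV. \<Sum>a\<in>UNIV. \<Sum>a'\<in>UNIV. X a a' * Y (b, a') (b, a))"
    unfolding mtr_def chan_def ..
  also have "\<dots> = (\<Sum>a\<in>UNIV. \<Sum>b\<in>UNIV. \<Sum>a'\<in>UNIV. X a a' * Y (b, a') (b, a))"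
    by (rule sum.swap)
  also have "\<dots> = (\<Sum>a\<in>UNIV. \<Sum>a'\<in>UNIV. \<Sum>b\<in>UNIV. X a a' * Y (b, a') (b, a))"
    by (rule sum.cong[OF refl], rule sum.swap)
  also have "\<dots> = (\<Sum>a\<in>UNIV. \<Sum>a'\<in>UNIV. X a a' * ptrR Y a' a)"
    unfolding ptrR_def by (simp add: sum_distrib_left)
  also have "\<dots> = mtr X"
    unfolding assms mtr_def mid_def by (simp add: if_distrib[of "\<lambda>x. _ * x"] cong: if_cong)
  finally show ?thesis .
qed

lemma sum_delta_prod:
  fixes f :: "'a::finite \<Rightarrow> complex" and n k :: nat
  assumes "k < n"
  shows "(\<Sum>s\<in>{..<n}\<times>(UNIV::'a set). if fst s = k then f (snd s) else 0) = (\<Sum>a\<in>UNIV. f a)"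
proof -
  have "(\<Sum>s\<in>{..<n}\<times>(UNIV::'a set). if fst s = k then f (snd s) else 0)
     = (\<Sum>k'\<in>{..<n}. \<Sum>a\<in>UNIV. if k' = k then f a else 0)"
    by (subst sum_prod_fs[symmetric, where f = "\<lambda>k' a. if k' = k then f a else 0"]) simp
  also have "\<dots> = (\<Sum>k'\<in>{..<n}. if k' = k then (\<Sum>a\<in>UNIV. f a) else 0)"
    by (rule sum.cong) auto
  also have "\<dots> = (\<Sum>a\<in>UNIV. f a)" using assms by (subst sum.delta) auto
  finally show ?thesis .
qed

lemma chan_cp:
  fixes Y :: "('b::finite \<times> 'a::finite, 'b \<times> 'a) cmat"
  assumes "psd Y"
  shows "completely_positive (chan Y)"
  unfolding completely_positive_def
proof (intro allI impI)
  fix n :: nat and X :: "(nat \<times> 'a, nat \<times> 'a) cmat"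
  assume pX: "psd_on ({..<n} \<times> UNIV) X"
  let ?S = "{..<n} \<times> (UNIV :: 'a set)" and ?T = "{..<n} \<times> (UNIV :: 'b set)"
  obtain w :: "nat \<Rightarrow> 'b \<times> 'a \<Rightarrow> complex" and m where Y: "Y = (\<lambda>x y. \<Sum>j<m. w j x * cnj (w j y))"
    using assms psd_iff_decomp by blast
  define K where "K = (\<lambda>j (q :: nat \<times> 'b) (s :: nat \<times> 'a). if fst s = fst q then cnj (w j (snd q, snd s)) else 0)"
  have key: "ampl (chan Y) X q p = (\<Sum>j<m. \<Sum>s\<in>?S. \<Sum>s'\<in>?S. K j q s * X s s' * cnj (K j p s'))"
    if q: "q \<in> ?T" and p: "p \<in> ?T" for q p
  proof -
    obtain k b where qkb: "q = (k, b)" by (cases q)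
    obtain l b' where plb: "p = (l, b')" by (cases p)
    have kn: "k < n" and ln: "l < n" using q p qkb plb by auto
    have inner: "(\<Sum>s\<in>?S. \<Sum>s'\<in>?S. K j q s * X s s' * cnj (K j p s')) =
        (\<Sum>a\<in>UNIV. \<Sum>a'\<in>UNIV. cnj (w j (b, a)) * X (k, a) (l, a') * w j (b', a'))" for j
    proof -
      have "(\<Sum>s'\<in>?S. K j q s * X s s' * cnj (K j p s')) =
          (\<Sum>s'\<in>?S. if fst s' = l then K j q s * X s (l, snd s') * w j (b', snd s') else 0)" for s
        by (rule sum.cong[OF refl]) (auto simp: K_def plb)
      also have "\<dots> s = (\<Sum>a'\<in>UNIV. K j q s * X s (l, a') * w j (b', a'))" for s
        by (rule sum_delta_prod[OF ln])
      finally have e1: "(\<Sum>s'\<in>?S. K j q s * X s s' * cnj (K j p s')) = (\<Sum>a'\<in>UNIV. K j q s * X s (l, a') * w j (b', a'))" for s .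
      have "(\<Sum>s\<in>?S. \<Sum>s'\<in>?S. K j q s * X s s' * cnj (K j p s')) =
          (\<Sum>s\<in>?S. if fst s = k then (\<Sum>a'\<in>UNIV. cnj (w j (b, snd s)) * X (k, snd s) (l, a') * w j (b', a')) else 0)"
        unfolding e1 by (rule sum.cong[OF refl]) (auto simp: K_def qkb)
      also have "\<dots> = (\<Sum>a\<in>UNIV. \<Sum>a'\<in>UNIV. cnj (w j (b, a)) * X (k, a) (l, a') * w j (b', a'))"
        by (rule sum_delta_prod[OF kn])
      finally show ?thesis .
    qed
    have "ampl (chan Y) X q p = (\<Sum>a\<in>UNIV. \<Sum>a'\<in>UNIV. \<Sum>j<m. cnj (w j (b, a)) * X (k, a) (l, a') * w j (b', a'))"
      unfolding ampl_def chan_def qkb plb Y by (simp add: sum_distrib_left mult_ac)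
    also have "\<dots> = (\<Sum>a\<in>UNIV. \<Sum>j<m. \<Sum>a'\<in>UNIV. cnj (w j (b, a)) * X (k, a) (l, a') * w j (b', a'))"
      by (rule sum.cong[OF refl], rule sum.swap)
    also have "\<dots> = (\<Sum>j<m. \<Sum>a\<in>UNIV. \<Sum>a'\<in>UNIV. cnj (w j (b, a)) * X (k, a) (l, a') * w j (b', a'))"
      by (rule sum.swap)
    also have "\<dots> = (\<Sum>j<m. \<Sum>s\<in>?S. \<Sum>s'\<in>?S. K j q s * X s s' * cnj (K j p s'))"
      unfolding inner ..
    finally show ?thesis .
  qed
  have "psd_on ?T (\<lambda>q p. \<Sum>j<m. \<Sum>s\<in>?S. \<Sum>s'\<in>?S. K j q s * X s s' * cnj (K j p s'))"
    by (rule psd_on_sum) (auto intro: psd_on_conj[OF pX])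
  then show "psd_on ?T (ampl (chan Y) X)"
    using psd_on_cong[of ?T "ampl (chan Y) X", OF key] by blast
qed


definition eb :: "'a \<Rightarrow> 'a \<Rightarrow> ('a,'a) cmat" where
  "eb a a' = (\<lambda>x y. if x = a \<and> y = a' then 1 else 0)"

definition choi :: "(('a::finite,'a) cmat \<Rightarrow> ('b::finite,'b) cmat) \<Rightarrow> ('b \<times> 'a, 'b \<times> 'a) cmat" where
  "choi E = (\<lambda>(b',a') (b,a). E (eb a a') b b')"

lemma linear_map_zero: "linear_map E \<Longrightarrow> E (\<lambda>i j. 0) = (\<lambda>i j. 0)"
proof -
  assume "linear_map E"
  then have "E (\<lambda>i j. 0 * X i j) = (\<lambda>i j. 0 * E X i j)" for X unfolding linear_map_def by blast
  then show ?thesis by simp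
qed

lemma linear_map_sum:
  assumes "linear_map E" "finite K"
  shows "E (\<lambda>i j. \<Sum>k\<in>K. f k i j) = (\<lambda>i j. \<Sum>k\<in>K. E (f k) i j)"
  using assms(2)
proof (induction K rule: finite_induct)
  case empty
  then show ?case using linear_map_zero[OF assms(1)] by simp
next
  case (insert k K)
  have "E (\<lambda>i j. \<Sum>k\<in>insert k K. f k i j) = E (madd (f k) (\<lambda>i j. \<Sum>k\<in>K. f k i j))"
    using insert by (simp add: madd_def)
  also have "\<dots> = madd (E (f k)) (E (\<lambda>i j. \<Sum>k\<in>K. f k i j))"
    using assms(1) unfolding linear_map_def by blast
  finally show ?case using insert by (simp add: madd_def)
qed

lemma linear_map_scale:
  assumes "linear_map E"
  shows "E (\<lambda>i j. c * X i j) = (\<lambda>i j. c * E X i j)"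
  using assms unfolding linear_map_def by blast

lemma chan_choi:
  assumes "linear_map E"
  shows "chan (choi E) X = E X"
proof -
  have X: "X = (\<lambda>i j. \<Sum>p\<in>UNIV. X (fst p) (snd p) * eb (fst p) (snd p) i j)"
  proof (intro ext)
    fix i j
    have "(\<Sum>p\<in>UNIV. X (fst p) (snd p) * eb (fst p) (snd p) i j) = (\<Sum>p\<in>UNIV. if p = (i, j) then X i j else 0)"
      by (rule sum.cong) (auto simp: eb_def)
    then show "X i j = (\<Sum>p\<in>UNIV. X (fst p) (snd p) * eb (fst p) (snd p) i j)" by simp
  qed
  have "E X = (\<lambda>i j. \<Sum>p\<in>UNIV. E (\<lambda>i j. X (fst p) (snd p) * eb (fst p) (snd p) i j) i j)"
    by (subst X, rule linear_map_sum[OF assms]) simp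
  also have "\<dots> = (\<lambda>i j. \<Sum>p\<in>UNIV. X (fst p) (snd p) * E (eb (fst p) (snd p)) i j)"
    by (subst linear_map_scale[OF assms]) simp
  also have "\<dots> = chan (choi E) X"
    unfolding chan_def choi_def sum_UNIV_prod by simp
  finally show ?thesis by simp
qed

lemma choi_tp:
  assumes "\<forall>X. mtr (E X) = mtr X"
  shows "ptrR (choi E) = mid"
proof (intro ext)
  fix a' a
  have "ptrR (choi E) a' a = mtr (E (eb a a'))"
    unfolding ptrR_def choi_def mtr_def by simp
  also have "\<dots> = mtr (eb a a')" using assms by simp
  also have "\<dots> = mid a' a"
    unfolding mtr_def eb_def mid_def by (cases "a = a'") (auto intro: sum.neutral)
  finally show "ptrR (choi E) a' a = mid a' a" .
qed

lemma sum_UNIV_swap: "(\<Sum>p\<in>(UNIV::('x::finite \<times> 'y::finite) set). h (snd p, fst p)) = (\<Sum>q\<in>UNIV. h q)"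
  by (simp add: sum_UNIV_prod) (rule sum.swap)

lemma psd_on_one: "psd_on {()} (\<lambda>_ _. (1::complex))"
  unfolding psd_on_def
proof
  fix v :: "unit \<Rightarrow> complex"
  have "cnj (v ()) * v () = complex_of_real ((cmod (v ()))\<^sup>2)"
    by (subst complex_norm_square) (simp add: mult.commute)
  moreover have "(0::complex) \<le> complex_of_real ((cmod (v ()))\<^sup>2)" by (rule of_real_nonneg_c) simp
  ultimately show "0 \<le> (\<Sum>x\<in>{()}. \<Sum>y\<in>{()}. cnj (v x) * 1 * v y)"
    by (simp only: sum.insert_remove finite.emptyI empty_iff sum.empty) simp
qed

lemma choi_psd:
  fixes E :: "('a::finite,'a) cmat \<Rightarrow> ('b::finite,'b) cmat"
  assumes cp: "completely_positive E"
  shows "psd (choi E)"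
proof -
  obtain f :: "'a \<Rightarrow> nat" and n where fim: "f ` UNIV = {i. i < n}" and inj: "inj f"
    using finite_imp_inj_to_nat_seg[of "UNIV :: 'a set"] by auto
  define u where "u = (\<lambda>(q :: nat \<times> 'a). if fst q = f (snd q) then (1::complex) else 0)"
  define X0 where "X0 = (\<lambda>q p. u q * cnj (u p))"
  have "psd_on ({..<n} \<times> UNIV) (\<lambda>q p. \<Sum>s\<in>{()}. \<Sum>s'\<in>{()}. (\<lambda>q s. u q) q s * (1::complex) * cnj ((\<lambda>q s. u q) p s'))"
    by (rule psd_on_conj[OF psd_on_one])
  then have pX0: "psd_on ({..<n} \<times> UNIV) X0" unfolding X0_def by simp
  have pA: "psd_on ({..<n} \<times> UNIV) (ampl E X0)" using cp pX0 unfolding completely_positive_def by blast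
  define g where "g = (\<lambda>(x :: 'a \<times> 'b). (f (fst x), snd x))"
  have ginj: "inj g" using inj unfolding g_def inj_def by auto
  have gim: "g ` UNIV = {..<n} \<times> UNIV"
  proof
    show "g ` UNIV \<subseteq> {..<n} \<times> UNIV" using fim unfolding g_def by auto
    show "{..<n} \<times> UNIV \<subseteq> g ` UNIV"
    proof
      fix q :: "nat \<times> 'b" assume "q \<in> {..<n} \<times> UNIV"
      then obtain a where "fst q = f a" using fim by (cases q) (auto simp: image_iff)
      then have "q = g (a, snd q)" unfolding g_def by (cases q) auto
      then show "q \<in> g ` UNIV" by blast
    qed
  qed
  have ampl_g: "ampl E X0 (g x) (g y) = choi E (snd y, fst y) (snd x, fst x)" for x y
  proof -
    have "(\<lambda>c c'. X0 (f (fst x), c) (f (fst y), c')) = eb (fst x) (fst y)"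
      unfolding X0_def u_def eb_def using inj by (auto simp: fun_eq_iff inj_eq)
    then show ?thesis unfolding ampl_def g_def choi_def by (simp add: case_prod_unfold)
  qed
  show ?thesis unfolding psd_def psd_on_qf
  proof
    fix v :: "'b \<times> 'a \<Rightarrow> complex"
    define z where "z = (\<lambda>(q :: nat \<times> 'b). cnj (v (snd q, inv f (fst q))))"
    have zg: "z (g x) = cnj (v (snd x, fst x))" for x
      unfolding z_def g_def using inj by simp
    have "qf ({..<n} \<times> UNIV) (ampl E X0) z =
        (\<Sum>x\<in>UNIV. \<Sum>y\<in>UNIV. cnj (z (g x)) * ampl E X0 (g x) (g y) * z (g y))"
      unfolding qf_def gim[symmetric] sum.reindex[OF ginj] by simp
    also have "\<dots> = (\<Sum>x\<in>UNIV. \<Sum>y\<in>UNIV. (\<lambda>q r. v q * choi E r q * cnj (v r)) (snd x, fst x) (snd y, fst y))"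
      unfolding zg ampl_g by simp
    also have "\<dots> = (\<Sum>q\<in>UNIV. \<Sum>r\<in>UNIV. v q * choi E r q * cnj (v r))"
      unfolding sum_UNIV_swap[of "\<lambda>q. \<Sum>y\<in>UNIV. (\<lambda>q r. v q * choi E r q * cnj (v r)) q (snd y, fst y)"]
      unfolding sum_UNIV_swap[of "\<lambda>r. (\<lambda>q r. v q * choi E r q * cnj (v r)) _ r"] ..
    also have "\<dots> = (\<Sum>r\<in>UNIV. \<Sum>q\<in>UNIV. cnj (v r) * choi E r q * v q)"
      by (subst sum.swap) (simp add: mult_ac)
    also have "\<dots> = qf UNIV (choi E) v" unfolding qf_def ..
    finally show "0 \<le> qf UNIV (choi E) v" using pA unfolding psd_on_qf by metis
  qed
qed


definition ptrA :: "('b \<times> 'a::finite, 'b \<times> 'a) cmat \<Rightarrow> ('b, 'b) cmat" where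
  "ptrA Z = (\<lambda>b' b. \<Sum>a\<in>UNIV. Z (b', a) (b, a))"

lemma mtransp_mmul: "mtransp (mmul A B) = mmul (mtransp B) (mtransp A)"
  unfolding mtransp_def mmul_def by (auto simp: fun_eq_iff mult.commute)

lemma mtensor_apply: "mtensor A B (i, k) (j, l) = A i j * B k l"
  unfolding mtensor_def by simp

lemma mmul_tensor_mid_left:
  "mmul (mtensor A (mid :: ('a::finite,'a) cmat)) Z (b', a) y = (\<Sum>c\<in>UNIV. A b' c * Z (c, a) y)"
proof -
  have "mmul (mtensor A (mid :: ('a,'a) cmat)) Z (b', a) y = (\<Sum>c\<in>UNIV. \<Sum>d\<in>UNIV. if d = a then A b' c * Z (c, d) y else 0)"
    unfolding mmul_def sum_UNIV_prod mtensor_apply mid_def by (intro sum.cong refl) auto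
  also have "\<dots> = (\<Sum>c\<in>UNIV. A b' c * Z (c, a) y)" by simp
  finally show ?thesis .
qed

lemma mmul_tensor_mid_right:
  "mmul Z (mtensor B (mid :: ('a::finite,'a) cmat)) x (b, a) = (\<Sum>c\<in>UNIV. Z x (c, a) * B c b)"
proof -
  have "mmul Z (mtensor B (mid :: ('a,'a) cmat)) x (b, a) = (\<Sum>c\<in>UNIV. \<Sum>d\<in>UNIV. if d = a then Z x (c, d) * B c b else 0)"
    unfolding mmul_def sum_UNIV_prod mtensor_apply mid_def by (intro sum.cong refl) auto
  also have "\<dots> = (\<Sum>c\<in>UNIV. Z x (c, a) * B c b)" by simp
  finally show ?thesis .
qed

lemma mmul_mid_tensor_left:
  "mmul (mtensor (mid :: ('b::finite,'b) cmat) U) Z (b', a) y = (\<Sum>d\<in>UNIV. U a d * Z (b', d) y)"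
proof -
  have "mmul (mtensor (mid :: ('b,'b) cmat) U) Z (b', a) y = (\<Sum>c\<in>UNIV. if c = b' then (\<Sum>d\<in>UNIV. U a d * Z (c, d) y) else 0)"
    unfolding mmul_def sum_UNIV_prod mtensor_apply mid_def by (intro sum.cong refl) auto
  also have "\<dots> = (\<Sum>d\<in>UNIV. U a d * Z (b', d) y)" by simp
  finally show ?thesis .
qed

lemma mmul_mid_tensor_right:
  "mmul Z (mtensor (mid :: ('b::finite,'b) cmat) U) x (b, a) = (\<Sum>d\<in>UNIV. Z x (b, d) * U d a)"
proof -
  have "mmul Z (mtensor (mid :: ('b,'b) cmat) U) x (b, a) = (\<Sum>c\<in>UNIV. if c = b then (\<Sum>d\<in>UNIV. Z x (c, d) * U d a) else 0)"
    unfolding mmul_def sum_UNIV_prod mtensor_apply mid_def by (intro sum.cong refl) auto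
  also have "\<dots> = (\<Sum>d\<in>UNIV. Z x (b, d) * U d a)" by simp
  finally show ?thesis .
qed

lemma ptrA_left: "ptrA (mmul (mtensor A (mid :: ('a::finite,'a) cmat)) Z) = mmul A (ptrA Z)"
  unfolding ptrA_def mmul_tensor_mid_left
  by (auto simp: fun_eq_iff mmul_def sum_distrib_left intro: sum.swap)

lemma ptrA_right: "ptrA (mmul Z (mtensor B (mid :: ('a::finite,'a) cmat))) = mmul (ptrA Z) B"
  unfolding ptrA_def mmul_tensor_mid_right
  by (auto simp: fun_eq_iff mmul_def sum_distrib_right intro: sum.swap)

lemma ptrA_cyc:
  "ptrA (mmul (mtensor (mid :: ('b::finite,'b) cmat) U) Z) = ptrA (mmul Z (mtensor (mid :: ('b,'b) cmat) (U :: ('a::finite,'a) cmat)))"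
  unfolding ptrA_def mmul_mid_tensor_left mmul_mid_tensor_right
  by (auto simp: fun_eq_iff mult.commute intro: sum.swap)

lemma chan_ptrA: "chan Y X = mtransp (ptrA (mmul Y (mtensor mid X)))"
  unfolding chan_def mtransp_def ptrA_def mmul_mid_tensor_right
  by (auto simp: fun_eq_iff mult.commute intro: sum.swap)

lemma mtransp_madj_mconj: "mtransp (madj (mconj V)) = V"
  unfolding mtransp_def madj_def mconj_def by simp

lemma mtransp_mconj: "mtransp (mconj V) = madj V"
  unfolding mtransp_def madj_def mconj_def by simp

lemma ptrA_conj_unitary:
  fixes A :: "('b::finite,'b) cmat" and U :: "('a::finite,'a) cmat"
  assumes U: "mmul (madj U) U = mid"
  shows "ptrA (mmul (mmul (mtensor A U) Z) (madj (mtensor A U))) = mmul (mmul A (ptrA Z)) (madj A)"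
proof -
  have W: "mtensor A U = mmul (mtensor A mid) (mtensor mid U)" by (simp add: mtensor_mmul)
  have Wa: "madj (mtensor A U) = mmul (mtensor mid (madj U)) (mtensor (madj A) mid)"
    by (simp add: mtensor_mmul madj_mtensor)
  have "mmul (mmul (mtensor A U) Z) (madj (mtensor A U)) =
      mmul (mtensor A mid) (mmul (mmul (mtensor mid U) (mmul Z (mtensor mid (madj U)))) (mtensor (madj A) mid))"
    by (simp only: Wa, simp only: W mmul_assoc)
  then have "ptrA (mmul (mmul (mtensor A U) Z) (madj (mtensor A U))) =
      mmul (mmul A (ptrA (mmul (mtensor mid U) (mmul Z (mtensor mid (madj U)))))) (madj A)"
    by (simp add: ptrA_left ptrA_right, simp add: mmul_assoc)
  also have "ptrA (mmul (mtensor mid U) (mmul Z (mtensor mid (madj U)))) = ptrA Z"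
    unfolding ptrA_cyc mmul_assoc mtensor_mmul U by (simp add: mtensor_mid)
  finally show ?thesis .
qed

lemma chan_conj:
  fixes U :: "('a::finite,'a) cmat" and V :: "('b::finite,'b) cmat"
  assumes U: "mmul (madj U) U = mid"
  shows "chan (mmul (mmul (mtensor (mconj V) U) Y) (madj (mtensor (mconj V) U))) (mmul (mmul U X) (madj U))
     = mmul (mmul V (chan Y X)) (madj V)"
proof -
  let ?W = "mtensor (mconj V) U"
  have s2: "mmul (madj ?W) (mtensor mid (mmul U (mmul X (madj U)))) = mmul (mtensor mid X) (madj ?W)"
  proof -
    have "mmul (madj U) (mmul U (mmul X (madj U))) = mmul X (madj U)"
      by (simp add: mmul_assoc[symmetric] U)
    then show ?thesis unfolding madj_mtensor mtensor_mmul by simp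
  qed
  have s3: "mmul (mmul (mmul ?W Y) (madj ?W)) (mtensor mid (mmul (mmul U X) (madj U)))
      = mmul (mmul ?W (mmul Y (mtensor mid X))) (madj ?W)"
    by (simp add: mmul_assoc s2)
  show ?thesis
    unfolding chan_ptrA s3 ptrA_conj_unitary[OF U] mtransp_mmul mtransp_madj_mconj mtransp_mconj
    by (simp add: mmul_assoc)
qed

lemma chan_inj: "(\<And>X. chan Y X = chan Y' X) \<Longrightarrow> Y = Y'"
proof -
  assume h: "\<And>X. chan Y X = chan Y' X"
  have e: "chan Z (eb a a') b b' = Z (b', a') (b, a)" for Z :: "('b::finite \<times> 'a::finite, 'b \<times> 'a) cmat" and a a' b b'
  proof -
    have "chan Z (eb a a') b b' = (\<Sum>x\<in>UNIV. if x = a then (\<Sum>y\<in>UNIV. if y = a' then Z (b', y) (b, x) else 0) else 0)"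
      unfolding chan_def eb_def by (intro sum.cong refl) (auto intro: sum.cong simp: if_distrib[of "\<lambda>x. x * _"] cong: if_cong)
    also have "\<dots> = Z (b', a') (b, a)" by simp
    finally show ?thesis .
  qed
  show "Y = Y'"
  proof (intro ext)
    fix x y :: "'b \<times> 'a"
    show "Y x y = Y' x y" using e[of Y "snd y" "snd x" "fst y" "fst x"] e[of Y' "snd y" "snd x" "fst y" "fst x"] h
      by (cases x; cases y) simp
  qed
qed


definition Wg :: "('g \<Rightarrow> ('a::finite, 'a) cmat) \<Rightarrow> ('g \<Rightarrow> ('b::finite, 'b) cmat) \<Rightarrow> 'g \<Rightarrow> ('b \<times> 'a, 'b \<times> 'a) cmat" where
  "Wg UA UB g = mtensor (mconj (UB g)) (UA g)"

lemma rep_zero: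
  fixes U :: "'g::topological_group_add \<Rightarrow> ('i::finite,'i) cmat"
  assumes "cont_unitary_rep U" shows "U 0 = mid"
proof -
  have h: "U 0 = mmul (U 0) (U 0)" using assms unfolding cont_unitary_rep_def by (metis add_0)
  have u: "mmul (madj (U 0)) (U 0) = mid" using assms unfolding cont_unitary_rep_def unitary_mat_def by blast
  have "mid = mmul (madj (U 0)) (mmul (U 0) (U 0))" using h u by simp
  also have "\<dots> = U 0" unfolding mmul_assoc[symmetric] u by simp
  finally show ?thesis by simp
qed

lemma rep_minus:
  fixes U :: "'g::topological_group_add \<Rightarrow> ('i::finite,'i) cmat"
  assumes "cont_unitary_rep U" shows "U (- g) = madj (U g)"
proof -
  have u: "mmul (U g) (madj (U g)) = mid" using assms unfolding cont_unitary_rep_def unitary_mat_def by blast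
  have hom: "U (- g + g) = mmul (U (- g)) (U g)" using assms unfolding cont_unitary_rep_def by blast
  have "madj (U g) = mmul (U 0) (madj (U g))" using rep_zero[OF assms] by simp
  also have "\<dots> = mmul (mmul (U (- g)) (U g)) (madj (U g))" using hom by simp
  also have "\<dots> = U (- g)" unfolding mmul_assoc u by simp
  finally show ?thesis by simp
qed

lemma rep_unitary: "cont_unitary_rep U \<Longrightarrow> unitary_mat (U g)"
  unfolding cont_unitary_rep_def by blast

lemma rep_hom: "cont_unitary_rep U \<Longrightarrow> U (g + h) = mmul (U g) (U h)"
  unfolding cont_unitary_rep_def by blast

lemma Wg_hom:
  assumes "cont_unitary_rep UA" "cont_unitary_rep UB"
  shows "Wg UA UB (g + h) = mmul (Wg UA UB g) (Wg UA UB h)"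
  unfolding Wg_def rep_hom[OF assms(1)] rep_hom[OF assms(2)] mtensor_mmul mconj_mmul ..

lemma Wg_minus:
  assumes "cont_unitary_rep UA" "cont_unitary_rep UB"
  shows "Wg UA UB (- g) = madj (Wg UA UB g)"
  unfolding Wg_def rep_minus[OF assms(1)] rep_minus[OF assms(2)] madj_mtensor madj_mconj ..

lemma Wg_unitary:
  assumes "cont_unitary_rep UA" "cont_unitary_rep UB"
  shows "mmul (madj (Wg UA UB g)) (Wg UA UB g) = mid" "mmul (Wg UA UB g) (madj (Wg UA UB g)) = mid"
proof -
  have a: "unitary_mat (UA g)" "unitary_mat (mconj (UB g))"
    using rep_unitary[OF assms(1)] rep_unitary[OF assms(2)] unitary_mconj by blast+
  show "mmul (madj (Wg UA UB g)) (Wg UA UB g) = mid" "mmul (Wg UA UB g) (madj (Wg UA UB g)) = mid"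
    using a unfolding Wg_def madj_mtensor mtensor_mmul unitary_mat_def by (simp_all add: mtensor_mid)
qed

lemma inv_imp_cov:
  assumes A: "cont_unitary_rep UA" and B: "cont_unitary_rep UB"
    and inv: "\<And>g. mmul (mmul (Wg UA UB g) Y) (madj (Wg UA UB g)) = Y"
  shows "covariant UA UB (chan Y)"
  unfolding covariant_def
proof (intro allI)
  fix g X
  have u: "mmul (madj (UA g)) (UA g) = mid" using rep_unitary[OF A] unfolding unitary_mat_def by blast
  have "chan Y (mmul (mmul (UA g) X) (madj (UA g))) =
      chan (mmul (mmul (Wg UA UB g) Y) (madj (Wg UA UB g))) (mmul (mmul (UA g) X) (madj (UA g)))"
    using inv by simp
  also have "\<dots> = mmul (mmul (UB g) (chan Y X)) (madj (UB g))"
    unfolding Wg_def by (rule chan_conj[OF u])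
  finally show "chan Y (mmul (mmul (UA g) X) (madj (UA g))) = mmul (mmul (UB g) (chan Y X)) (madj (UB g))" .
qed

lemma cov_imp_inv:
  assumes A: "cont_unitary_rep UA" and B: "cont_unitary_rep UB"
    and cov: "covariant UA UB (chan Y)"
  shows "mmul (mmul (Wg UA UB g) Y) (madj (Wg UA UB g)) = Y"
proof (rule chan_inj)
  fix X'
  have u: "mmul (madj (UA g)) (UA g) = mid" "mmul (UA g) (madj (UA g)) = mid"
    using rep_unitary[OF A] unfolding unitary_mat_def by blast+
  define X where "X = mmul (mmul (madj (UA g)) X') (UA g)"
  have X': "X' = mmul (mmul (UA g) X) (madj (UA g))"
    unfolding X_def mmul_assoc u by (simp add: mmul_assoc[symmetric] u)
  have "chan (mmul (mmul (Wg UA UB g) Y) (madj (Wg UA UB g))) X' = mmul (mmul (UB g) (chan Y X)) (madj (UB g))"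
    unfolding X' Wg_def by (rule chan_conj[OF u(1)])
  also have "\<dots> = chan Y X'" unfolding X' using cov unfolding covariant_def by simp
  finally show "chan (mmul (mmul (Wg UA UB g) Y) (madj (Wg UA UB g))) X' = chan Y X'" .
qed


lemma haar_space: "haar_prob \<mu> \<Longrightarrow> space \<mu> = UNIV"
  unfolding haar_prob_def using sets_eq_imp_space_eq[of \<mu> borel] by simp

lemma haar_finite: "haar_prob \<mu> \<Longrightarrow> finite_measure \<mu>"
  by (rule finite_measureI) (simp add: haar_prob_def)

lemma haar_measure_space: "haar_prob \<mu> \<Longrightarrow> measure \<mu> (space \<mu>) = 1"
  unfolding haar_prob_def measure_def by simp

lemma haar_measurable:
  fixes f :: "'g::topological_group_add \<Rightarrow> 'b::topological_space"
  assumes "haar_prob \<mu>" "continuous_on UNIV f"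
  shows "f \<in> borel_measurable \<mu>"
proof -
  have "sets \<mu> = sets borel" using assms(1) unfolding haar_prob_def by blast
  then have "(borel_measurable \<mu> :: ('g \<Rightarrow> 'b) set) = borel_measurable borel" by (rule measurable_cong_sets) simp
  then show ?thesis using borel_measurable_continuous_onI[OF assms(2)] by simp
qed

lemma cont_integrable:
  fixes f :: "'g::topological_group_add \<Rightarrow> complex"
  assumes c: "compact (UNIV :: 'g set)" and h: "haar_prob \<mu>" and f: "continuous_on UNIV f"
  shows "integrable \<mu> f"
proof -
  interpret finite_measure \<mu> by (rule haar_finite[OF h])
  have "compact (f ` UNIV)" by (rule compact_continuous_image[OF f c])
  then obtain B where B: "\<forall>x\<in>f ` UNIV. norm x \<le> B" using compact_imp_bounded bounded_iff by metis
  show ?thesis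
    by (rule integrable_const_bound[where B = B]) (use B haar_measurable[OF h f] in auto)
qed

lemma haar_right_inv:
  fixes f :: "'g::topological_group_add \<Rightarrow> complex"
  assumes h: "haar_prob \<mu>" and f: "continuous_on UNIV f"
  shows "(\<integral>g. f (g + k) \<partial>\<mu>) = (\<integral>g. f g \<partial>\<mu>)"
proof -
  have sp: "space \<mu> = UNIV" by (rule haar_space[OF h])
  have T: "(\<lambda>g. g + k) \<in> measurable \<mu> \<mu>"
  proof -
    have S: "sets \<mu> = sets (borel :: 'g measure)" using h unfolding haar_prob_def by blast
    have "measurable \<mu> \<mu> = measurable (borel :: 'g measure) (borel :: 'g measure)" by (rule measurable_cong_sets[OF S S])
    moreover have "(\<lambda>g. g + k) \<in> borel_measurable borel"
      by (rule borel_measurable_continuous_onI) (intro continuous_intros)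
    ultimately show ?thesis by simp
  qed
  have D: "distr \<mu> \<mu> (\<lambda>g. g + k) = \<mu>"
  proof (rule measure_eqI)
    show "sets (distr \<mu> \<mu> (\<lambda>g. g + k)) = sets \<mu>" by simp
    fix A assume "A \<in> sets (distr \<mu> \<mu> (\<lambda>g. g + k))"
    then have A: "A \<in> sets \<mu>" by simp
    have "emeasure (distr \<mu> \<mu> (\<lambda>g. g + k)) A = emeasure \<mu> ((\<lambda>g. g + k) -` A \<inter> space \<mu>)"
      by (rule emeasure_distr[OF T A])
    also have "\<dots> = emeasure \<mu> A" using h A unfolding sp haar_prob_def by simp
    finally show "emeasure (distr \<mu> \<mu> (\<lambda>g. g + k)) A = emeasure \<mu> A" .
  qed
  have "(\<integral>g. f g \<partial>\<mu>) = integral\<^sup>L (distr \<mu> \<mu> (\<lambda>g. g + k)) f" by (simp add: D)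
  also have "\<dots> = (\<integral>g. f (g + k) \<partial>\<mu>)"
    by (rule integral_distr[OF T haar_measurable[OF h f]])
  finally show ?thesis by simp
qed


definition mcont :: "('g::topological_space \<Rightarrow> ('i,'j) cmat) \<Rightarrow> bool" where
  "mcont F \<longleftrightarrow> (\<forall>x y. continuous_on UNIV (\<lambda>g. F g x y))"

definition mint :: "'g measure \<Rightarrow> ('g \<Rightarrow> ('i,'j) cmat) \<Rightarrow> ('i,'j) cmat" where
  "mint \<mu> F = (\<lambda>x y. \<integral>g. F g x y \<partial>\<mu>)"

lemma mcont_mmul: "mcont F \<Longrightarrow> mcont G \<Longrightarrow> mcont (\<lambda>g. mmul (F g) (G g))"
  unfolding mcont_def mmul_def by (auto intro!: continuous_intros)

lemma mcont_madj: "mcont F \<Longrightarrow> mcont (\<lambda>g. madj (F g))"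
  unfolding mcont_def madj_def by (auto intro!: continuous_intros)

lemma mcont_mconj: "mcont F \<Longrightarrow> mcont (\<lambda>g. mconj (F g))"
  unfolding mcont_def mconj_def by (auto intro!: continuous_intros)

lemma mcont_const: "mcont (\<lambda>g. M)"
  unfolding mcont_def by auto

lemma mcont_mtensor: "mcont F \<Longrightarrow> mcont G \<Longrightarrow> mcont (\<lambda>g. mtensor (F g) (G g))"
  unfolding mcont_def mtensor_def by (auto simp: case_prod_unfold intro!: continuous_intros)

lemma mcont_rep: "cont_unitary_rep U \<Longrightarrow> mcont U"
  unfolding mcont_def cont_unitary_rep_def by blast

lemma mcont_Wg: "cont_unitary_rep UA \<Longrightarrow> cont_unitary_rep UB \<Longrightarrow> mcont (Wg UA UB)"
  unfolding Wg_def by (intro mcont_mtensor mcont_mconj mcont_rep)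

lemma mcont_minus: "mcont F \<Longrightarrow> mcont (\<lambda>g::'g::topological_group_add. F (- g))"
  unfolding mcont_def
proof (intro allI)
  fix x y assume "\<forall>x y. continuous_on UNIV (\<lambda>g. F g x y)"
  then have c: "continuous_on UNIV (\<lambda>g. F g x y)" by blast
  show "continuous_on UNIV (\<lambda>g. F (- g) x y)"
    using continuous_on_compose[OF continuous_on_minus[OF continuous_on_id] c[THEN continuous_on_subset]]
    by (simp add: o_def)
qed

lemma mcont_shift: "mcont F \<Longrightarrow> mcont (\<lambda>g::'g::topological_group_add. F (g + k))"
  unfolding mcont_def
proof (intro allI)
  fix x y assume "\<forall>x y. continuous_on UNIV (\<lambda>g. F g x y)"
  then have c: "continuous_on UNIV (\<lambda>g. F g x y)" by blast
  show "continuous_on UNIV (\<lambda>g. F (g + k) x y)"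
    using continuous_on_compose[OF continuous_on_add[OF continuous_on_id continuous_on_const] c[THEN continuous_on_subset]]
    by (simp add: o_def)
qed

context
  fixes \<mu> :: "'g::topological_group_add measure"
  assumes cpt: "compact (UNIV :: 'g set)" and haar: "haar_prob \<mu>"
begin

lemma mint_integrable: "mcont F \<Longrightarrow> integrable \<mu> (\<lambda>g. F g x y)"
  unfolding mcont_def using cont_integrable[OF cpt haar] by blast

lemma mint_mmul_left:
  assumes "mcont F"
  shows "mmul A (mint \<mu> F) = mint \<mu> (\<lambda>g. mmul A (F g))"
  unfolding mint_def mmul_def
  by (auto simp: fun_eq_iff Bochner_Integration.integral_sum integrable_mult_right mint_integrable[OF assms])

lemma mint_mmul_right:
  assumes "mcont F"
  shows "mmul (mint \<mu> F) A = mint \<mu> (\<lambda>g. mmul (F g) A)"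
  unfolding mint_def mmul_def
  by (auto simp: fun_eq_iff Bochner_Integration.integral_sum integrable_mult_left mint_integrable[OF assms])

lemma mint_mtr:
  assumes "mcont F"
  shows "mtr (mint \<mu> F) = (\<integral>g. mtr (F g) \<partial>\<mu>)"
  unfolding mint_def mtr_def
  by (simp add: Bochner_Integration.integral_sum mint_integrable[OF assms])

lemma mint_ptrR:
  assumes "mcont F"
  shows "ptrR (mint \<mu> F) = mint \<mu> (\<lambda>g. ptrR (F g))"
  unfolding mint_def ptrR_def
  by (simp add: fun_eq_iff Bochner_Integration.integral_sum mint_integrable[OF assms])

lemma mint_const: "mint \<mu> (\<lambda>g. M) = M"
  unfolding mint_def using haar_measure_space[OF haar] by simp

lemma mint_shift:
  assumes "mcont F"
  shows "mint \<mu> (\<lambda>g. F (g + k)) = mint \<mu> F"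
  unfolding mint_def
  using haar_right_inv[OF haar] assms unfolding mcont_def by (auto simp: fun_eq_iff)

lemma integral_nonneg_complex:
  fixes f :: "'g \<Rightarrow> complex"
  assumes "\<And>g. 0 \<le> f g"
  shows "0 \<le> (\<integral>g. f g \<partial>\<mu>)"
proof -
  have "f = (\<lambda>g. complex_of_real (Re (f g)))"
    using assms by (auto simp: fun_eq_iff nonneg_complex_iff complex_eq_iff)
  then have "(\<integral>g. f g \<partial>\<mu>) = complex_of_real (\<integral>g. Re (f g) \<partial>\<mu>)"
    by (metis integral_complex_of_real)
  moreover have "0 \<le> (\<integral>g. Re (f g) \<partial>\<mu>)"
    using assms by (intro Bochner_Integration.integral_nonneg) (simp add: nonneg_complex_iff)
  ultimately show ?thesis by (simp add: of_real_nonneg_c)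
qed

lemma mint_psd:
  fixes F :: "'g \<Rightarrow> ('i::finite,'i) cmat"
  assumes c: "mcont F" and p: "\<And>g. psd (F g)"
  shows "psd (mint \<mu> F)"
  unfolding psd_def psd_on_qf
proof
  fix v :: "'i \<Rightarrow> complex"
  have "qf UNIV (mint \<mu> F) v = (\<integral>g. qf UNIV (F g) v \<partial>\<mu>)"
    unfolding qf_def mint_def
    by (simp add: Bochner_Integration.integral_sum integrable_mult_left integrable_mult_right mint_integrable[OF c])
  also have "0 \<le> \<dots>" using p unfolding psd_def psd_on_qf by (intro integral_nonneg_complex) blast
  finally show "0 \<le> qf UNIV (mint \<mu> F) v" .
qed

end


lemma ptrR_left: "ptrR (mmul (mtensor (mid :: ('b::finite,'b) cmat) B) Z) = mmul B (ptrR Z)"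
  unfolding ptrR_def mmul_mid_tensor_left
  by (auto simp: fun_eq_iff mmul_def sum_distrib_left intro: sum.swap)

lemma ptrR_right: "ptrR (mmul Z (mtensor (mid :: ('b::finite,'b) cmat) B)) = mmul (ptrR Z) B"
  unfolding ptrR_def mmul_mid_tensor_right
  by (auto simp: fun_eq_iff mmul_def sum_distrib_right intro: sum.swap)

lemma ptrR_cyc:
  "ptrR (mmul (mtensor A (mid :: ('a::finite,'a) cmat)) Z) = ptrR (mmul Z (mtensor (A :: ('b::finite,'b) cmat) (mid :: ('a,'a) cmat)))"
  unfolding ptrR_def mmul_tensor_mid_left mmul_tensor_mid_right
  by (auto simp: fun_eq_iff mult.commute intro: sum.swap)

lemma ptrR_conj_unitary:
  fixes A :: "('b::finite,'b) cmat" and U :: "('a::finite,'a) cmat"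
  assumes A: "mmul A (madj A) = mid"
  shows "ptrR (mmul (mmul (madj (mtensor A U)) Y) (mtensor A U)) = mmul (mmul (madj U) (ptrR Y)) U"
proof -
  have W: "mtensor A U = mmul (mtensor A mid) (mtensor mid U)" by (simp add: mtensor_mmul)
  have Wa: "madj (mtensor A U) = mmul (mtensor mid (madj U)) (mtensor (madj A) mid)"
    by (simp add: mtensor_mmul madj_mtensor)
  have "mmul (mmul (madj (mtensor A U)) Y) (mtensor A U) =
      mmul (mtensor mid (madj U)) (mmul (mmul (mtensor (madj A) mid) (mmul Y (mtensor A mid))) (mtensor mid U))"
    by (simp only: Wa, simp only: W mmul_assoc)
  then have "ptrR (mmul (mmul (madj (mtensor A U)) Y) (mtensor A U)) =
      mmul (mmul (madj U) (ptrR (mmul (mtensor (madj A) mid) (mmul Y (mtensor A mid))))) U"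
    by (simp add: ptrR_left ptrR_right, simp add: mmul_assoc)
  also have "ptrR (mmul (mtensor (madj A) mid) (mmul Y (mtensor A mid))) = ptrR Y"
    unfolding ptrR_cyc mmul_assoc mtensor_mmul A by (simp add: mtensor_mid)
  finally show ?thesis .
qed

lemma mtr_cyc: "mtr (mmul A B) = mtr (mmul B A)"
  unfolding mtr_def mmul_def by (subst sum.swap) (simp add: mult.commute)

lemma twirl_eq: "twirl \<mu> UA UB M = mint \<mu> (\<lambda>g. mmul (mmul (Wg UA UB g) M) (madj (Wg UA UB g)))"
  unfolding twirl_def mint_def Wg_def ..


definition twirlm :: "'g measure \<Rightarrow> ('g \<Rightarrow> ('a::finite, 'a) cmat) \<Rightarrow> ('g \<Rightarrow> ('b::finite, 'b) cmat)
    \<Rightarrow> ('b \<times> 'a, 'b \<times> 'a) cmat \<Rightarrow> ('b \<times> 'a, 'b \<times> 'a) cmat" where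
  "twirlm \<mu> UA UB Y = mint \<mu> (\<lambda>g. mmul (mmul (madj (Wg UA UB g)) Y) (Wg UA UB g))"

lemma mcont_lshift: "mcont F \<Longrightarrow> mcont (\<lambda>g::'g::topological_group_add. F (k + g))"
  unfolding mcont_def
proof (intro allI)
  fix x y assume "\<forall>x y. continuous_on UNIV (\<lambda>g. F g x y)"
  then have c: "continuous_on UNIV (\<lambda>g. F g x y)" by blast
  show "continuous_on UNIV (\<lambda>g. F (k + g) x y)"
    using continuous_on_compose[OF continuous_on_add[OF continuous_on_const continuous_on_id] c[THEN continuous_on_subset]]
    by (simp add: o_def)
qed

context
  fixes \<mu> :: "'g::topological_group_add measure"
    and UA :: "'g \<Rightarrow> ('a::finite, 'a) cmat"
    and UB :: "'g \<Rightarrow> ('b::finite, 'b) cmat"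
  assumes cpt: "compact (UNIV :: 'g set)" and haar: "haar_prob \<mu>"
    and A: "cont_unitary_rep UA" and B: "cont_unitary_rep UB"
begin

lemma mcW: "mcont (Wg UA UB)" by (rule mcont_Wg[OF A B])

lemma mc_conj: "mcont (\<lambda>g. mmul (mmul (Wg UA UB g) M) (madj (Wg UA UB g)))"
  by (intro mcont_mmul mcont_madj mcont_const mcW)

lemma mc_conj': "mcont (\<lambda>g. mmul (mmul (madj (Wg UA UB g)) M) (Wg UA UB g))"
  by (intro mcont_mmul mcont_madj mcont_const mcW)

lemma twirl_psd: "psd \<sigma> \<Longrightarrow> psd (twirl \<mu> UA UB \<sigma>)"
  unfolding twirl_eq by (rule mint_psd[OF cpt haar mc_conj]) (rule psd_conj)

lemma mtr_const_int: "(\<integral>g. c \<partial>\<mu>) = (c::complex)"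
  using haar_measure_space[OF haar] by simp

lemma twirl_inv_trace:
  assumes inv: "\<And>g. mmul (mmul (Wg UA UB g) Y) (madj (Wg UA UB g)) = Y"
  shows "mtr (mmul (twirl \<mu> UA UB \<sigma>) Y) = mtr (mmul \<sigma> Y)"
proof -
  have "mtr (mmul (twirl \<mu> UA UB \<sigma>) Y) = (\<integral>g. mtr (mmul (mmul (mmul (Wg UA UB g) \<sigma>) (madj (Wg UA UB g))) Y) \<partial>\<mu>)"
    unfolding twirl_eq mint_mmul_right[OF cpt haar mc_conj] 
    by (rule mint_mtr[OF cpt haar]) (intro mcont_mmul mc_conj mcont_const)
  also have "\<dots> = (\<integral>g. mtr (mmul \<sigma> Y) \<partial>\<mu>)"
  proof (rule Bochner_Integration.integral_cong[OF refl])
    fix g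
    have i: "mmul (mmul (madj (Wg UA UB g)) Y) (Wg UA UB g) = Y"
      using inv[of "- g"] unfolding Wg_minus[OF A B] by simp
    have "mtr (mmul (mmul (mmul (Wg UA UB g) \<sigma>) (madj (Wg UA UB g))) Y)
        = mtr (mmul (Wg UA UB g) (mmul \<sigma> (mmul (madj (Wg UA UB g)) Y)))"
      by (simp add: mmul_assoc)
    also have "\<dots> = mtr (mmul \<sigma> (mmul (mmul (madj (Wg UA UB g)) Y) (Wg UA UB g)))"
      by (subst mtr_cyc) (simp add: mmul_assoc)
    finally show "mtr (mmul (mmul (mmul (Wg UA UB g) \<sigma>) (madj (Wg UA UB g))) Y) = mtr (mmul \<sigma> Y)"
      unfolding i .
  qed
  also have "\<dots> = mtr (mmul \<sigma> Y)" by (rule mtr_const_int)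
  finally show ?thesis .
qed

lemma twirlm_psd: "psd Y \<Longrightarrow> psd (twirlm \<mu> UA UB Y)"
  unfolding twirlm_def
  by (rule mint_psd[OF cpt haar mc_conj']) (metis psd_conj madj_madj)

lemma twirlm_ptrR:
  assumes "ptrR Y = mid"
  shows "ptrR (twirlm \<mu> UA UB Y) = mid"
proof -
  have "ptrR (twirlm \<mu> UA UB Y) = mint \<mu> (\<lambda>g. ptrR (mmul (mmul (madj (Wg UA UB g)) Y) (Wg UA UB g)))"
    unfolding twirlm_def by (rule mint_ptrR[OF cpt haar mc_conj'])
  also have "\<dots> = mint \<mu> (\<lambda>g. mid)"
  proof -
    have "ptrR (mmul (mmul (madj (Wg UA UB g)) Y) (Wg UA UB g)) = mid" for g
    proof -
      have uA: "mmul (madj (UA g)) (UA g) = mid" using rep_unitary[OF A] unfolding unitary_mat_def by blast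
      have uB: "mmul (mconj (UB g)) (madj (mconj (UB g))) = mid"
        using unitary_mconj[OF rep_unitary[OF B]] unfolding unitary_mat_def by blast
      show ?thesis unfolding Wg_def ptrR_conj_unitary[OF uB] assms by (simp add: uA)
    qed
    then show ?thesis by simp
  qed
  also have "\<dots> = mid" by (rule mint_const[OF cpt haar])
  finally show ?thesis .
qed

lemma twirlm_trace:
  "mtr (mmul \<sigma> (twirlm \<mu> UA UB Y)) = mtr (mmul (twirl \<mu> UA UB \<sigma>) Y)"
proof -
  have "mtr (mmul \<sigma> (twirlm \<mu> UA UB Y)) = (\<integral>g. mtr (mmul \<sigma> (mmul (mmul (madj (Wg UA UB g)) Y) (Wg UA UB g))) \<partial>\<mu>)"
    unfolding twirlm_def mint_mmul_left[OF cpt haar mc_conj']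
    by (rule mint_mtr[OF cpt haar]) (intro mcont_mmul mc_conj' mcont_const)
  also have "\<dots> = (\<integral>g. mtr (mmul (mmul (mmul (Wg UA UB g) \<sigma>) (madj (Wg UA UB g))) Y) \<partial>\<mu>)"
  proof (rule Bochner_Integration.integral_cong[OF refl])
    fix g
    have "mtr (mmul \<sigma> (mmul (mmul (madj (Wg UA UB g)) Y) (Wg UA UB g)))
        = mtr (mmul (mmul \<sigma> (mmul (madj (Wg UA UB g)) Y)) (Wg UA UB g))"
      by (simp add: mmul_assoc)
    also have "\<dots> = mtr (mmul (Wg UA UB g) (mmul \<sigma> (mmul (madj (Wg UA UB g)) Y)))"
      by (rule mtr_cyc)
    finally show "mtr (mmul \<sigma> (mmul (mmul (madj (Wg UA UB g)) Y) (Wg UA UB g))) =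
        mtr (mmul (mmul (mmul (Wg UA UB g) \<sigma>) (madj (Wg UA UB g))) Y)"
      by (simp add: mmul_assoc)
  qed
  also have "\<dots> = mtr (mmul (twirl \<mu> UA UB \<sigma>) Y)"
    unfolding twirl_eq mint_mmul_right[OF cpt haar mc_conj]
    by (rule mint_mtr[OF cpt haar, symmetric]) (intro mcont_mmul mc_conj mcont_const)
  finally show ?thesis .
qed

lemma twirlm_inv:
  "mmul (mmul (Wg UA UB h) (twirlm \<mu> UA UB Y)) (madj (Wg UA UB h)) = twirlm \<mu> UA UB Y"
proof -
  define F where "F = (\<lambda>x. mmul (mmul (Wg UA UB x) Y) (madj (Wg UA UB x)))"
  have mF: "mcont F" unfolding F_def by (rule mc_conj)
  have t: "twirlm \<mu> UA UB Y = mint \<mu> (\<lambda>g. F (- g))"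
    unfolding twirlm_def F_def Wg_minus[OF A B] by simp
  have "mmul (mmul (Wg UA UB h) (twirlm \<mu> UA UB Y)) (madj (Wg UA UB h)) =
      mint \<mu> (\<lambda>g. mmul (mmul (Wg UA UB h) (F (- g))) (madj (Wg UA UB h)))"
    unfolding t mint_mmul_left[OF cpt haar mcont_minus[OF mF]]
    by (rule mint_mmul_right[OF cpt haar]) (intro mcont_mmul mcont_const mcont_minus mF)
  also have "\<dots> = mint \<mu> (\<lambda>g. F (h + - g))"
  proof -
    have "mmul (mmul (Wg UA UB h) (F (- g))) (madj (Wg UA UB h)) = F (h + - g)" for g
      unfolding F_def Wg_hom[OF A B] madj_mmul by (simp add: mmul_assoc)
    then show ?thesis by simp
  qed
  also have "\<dots> = mint \<mu> (\<lambda>g. F (h + - (g + h)))"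
    by (rule mint_shift[OF cpt haar, symmetric]) (intro mcont_minus mcont_lshift mF)
  also have "\<dots> = mint \<mu> (\<lambda>g. F (- g))"
  proof -
    have "h + - (g + h) = - g" for g :: 'g
      by (simp only: minus_add add.assoc[symmetric] add.right_inverse add_0_left)
    then show ?thesis by simp
  qed
  finally show ?thesis unfolding t .
qed

end


definition herm :: "('i,'i) cmat \<Rightarrow> ('i,'i) cmat" where
  "herm A = (\<lambda>x y. (A x y + cnj (A y x)) / 2)"

definition ip :: "('i::finite,'j::finite) cmat \<Rightarrow> ('i,'j) cmat \<Rightarrow> real" where
  "ip A Q = (\<Sum>x\<in>UNIV. \<Sum>y\<in>UNIV. Re (cnj (A x y) * Q x y))"

definition tomat :: "complex ^ ('i::finite \<times> 'j::finite) \<Rightarrow> ('i,'j) cmat" where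
  "tomat v = (\<lambda>x y. v $ (x, y))"

definition frommat :: "('i::finite,'j::finite) cmat \<Rightarrow> complex ^ ('i \<times> 'j)" where
  "frommat M = (\<chi> p. M (fst p) (snd p))"

lemma tomat_frommat[simp]: "tomat (frommat M) = M"
  unfolding tomat_def frommat_def by simp

lemma tomat_add: "tomat (v + w) = (\<lambda>x y. tomat v x y + tomat w x y)"
  unfolding tomat_def by simp

lemma tomat_scaleR: "tomat (c *\<^sub>R v) = (\<lambda>x y. complex_of_real c * tomat v x y)"
  unfolding tomat_def vector_scaleR_component by (simp add: scaleR_conv_of_real)

lemma tomat_zero[simp]: "tomat 0 = (\<lambda>x y. 0)"
  unfolding tomat_def by simp

lemma tomat_eq_zero: "tomat v = (\<lambda>x y. 0) \<Longrightarrow> v = 0"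
  unfolding tomat_def by (auto simp: vec_eq_iff fun_eq_iff)

lemma inner_tomat: "inner av v = ip (tomat av) (tomat v)"
  unfolding inner_vec_def ip_def tomat_def sum_UNIV_prod
  by (simp add: inner_complex_def)

lemma ip_add2: "ip A (\<lambda>x y. P x y + Q x y) = ip A P + ip A Q"
  unfolding ip_def by (simp add: distrib_left sum.distrib)

lemma ip_sub2: "ip A (\<lambda>x y. P x y - Q x y) = ip A P - ip A Q"
  unfolding ip_def by (simp add: right_diff_distrib sum_subtractf)

lemma ip_scale2: "ip A (\<lambda>x y. complex_of_real t * Q x y) = t * ip A Q"
  unfolding ip_def by (simp add: sum_distrib_left mult.left_commute)

lemma ip_zero2: "ip A (\<lambda>x y. 0) = 0"
  unfolding ip_def by simp

lemma herm_id: "(\<And>x y. Q y x = cnj (Q x y)) \<Longrightarrow> herm Q = Q"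
proof -
  assume h: "\<And>x y. Q y x = cnj (Q x y)"
  show "herm Q = Q"
  proof (intro ext)
    fix x y
    have "cnj (Q y x) = Q x y" using h[of x y] by simp
    then show "herm Q x y = Q x y" unfolding herm_def by (simp add: field_simps)
  qed
qed

lemma herm_add: "herm (\<lambda>x y. P x y + Q x y) = (\<lambda>x y. herm P x y + herm Q x y)"
  unfolding herm_def by (intro ext) (simp add: add_divide_distrib[symmetric] ac_simps)

lemma herm_scale: "herm (\<lambda>x y. complex_of_real t * Q x y) = (\<lambda>x y. complex_of_real t * herm Q x y)"
  unfolding herm_def by (intro ext) (simp add: distrib_left)

lemma herm_zero: "herm (\<lambda>x y. 0) = (\<lambda>x y. 0)"
  unfolding herm_def by simp

lemma qf_adj: "qf UNIV (\<lambda>x y. cnj (A y x)) w = cnj (qf UNIV A w)"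
  unfolding qf_def cnj_sum by (subst sum.swap) (simp add: mult_ac)

lemma re_cnj: "Re (cnj z) = Re z" by simp

lemma re_cnj_swap: "Re (cnj p * (q * cnj r)) = Re (cnj q * p * r)"
proof -
  have "cnj p * (q * cnj r) = cnj (cnj q * p * r)" by simp
  then show ?thesis by (simp only: re_cnj)
qed

lemma qf_herm: "qf UNIV (herm A) w = complex_of_real (Re (qf UNIV A w))"
proof -
  have "qf UNIV (herm A) w = (\<Sum>x\<in>UNIV. \<Sum>y\<in>UNIV. (cnj (w x) * A x y * w y + cnj (w x) * cnj (A y x) * w y) / 2)"
    unfolding qf_def herm_def by (intro sum.cong refl) (simp add: algebra_simps add_divide_distrib)
  also have "\<dots> = (qf UNIV A w + qf UNIV (\<lambda>x y. cnj (A y x)) w) / 2"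
    unfolding qf_def by (simp add: sum_divide_distrib[symmetric] sum.distrib add_divide_distrib)
  finally show ?thesis unfolding qf_adj by (simp add: complex_add_cnj)
qed

lemma ip_rank1: "ip A (\<lambda>x y. w x * cnj (w y)) = Re (qf UNIV A w)"
proof -
  have "ip A (\<lambda>x y. w x * cnj (w y)) = Re (\<Sum>x\<in>UNIV. \<Sum>y\<in>UNIV. cnj (cnj (w x) * A x y * w y))"
    unfolding ip_def Re_sum by (intro sum.cong refl) (simp add: mult_ac)
  also have "\<dots> = Re (qf UNIV A w)" unfolding qf_def cnj_sum[symmetric] by (simp only: re_cnj)
  finally show ?thesis .
qed

lemma ip_tensor_rank1:
  fixes A :: "('b::finite \<times> 'a::finite, 'b \<times> 'a) cmat"
  shows "ip A (mtensor (mid :: ('b,'b) cmat) (\<lambda>x y. w x * cnj (w y))) = Re (qf UNIV (ptrR A) w)"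
proof -
  have "ip A (mtensor (mid :: ('b,'b) cmat) (\<lambda>x y. w x * cnj (w y))) =
      (\<Sum>b\<in>UNIV. \<Sum>a\<in>UNIV. \<Sum>b'\<in>UNIV. \<Sum>a'\<in>UNIV. if b = b' then Re (cnj (A (b', a) (b', a')) * (w a * cnj (w a'))) else 0)"
    unfolding ip_def sum_UNIV_prod mtensor_apply mid_def by (intro sum.cong refl) auto
  also have "\<dots> = (\<Sum>b\<in>UNIV. \<Sum>a\<in>UNIV. \<Sum>a'\<in>UNIV. Re (cnj (A (b, a) (b, a')) * (w a * cnj (w a'))))"
    by (intro sum.cong refl) (rule delta_sum2)
  also have "\<dots> = (\<Sum>a\<in>UNIV. \<Sum>a'\<in>UNIV. \<Sum>b\<in>UNIV. Re (cnj (A (b, a) (b, a')) * (w a * cnj (w a'))))"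
    by (subst sum.swap) (rule sum.cong[OF refl], rule sum.swap)
  also have "\<dots> = (\<Sum>a\<in>UNIV. \<Sum>a'\<in>UNIV. \<Sum>b\<in>UNIV. Re (cnj (w a) * A (b, a) (b, a') * w a'))"
    unfolding re_cnj_swap ..
  also have "\<dots> = Re (qf UNIV (ptrR A) w)"
    unfolding qf_def ptrR_def Re_sum
    by (intro sum.cong refl) (simp add: sum_distrib_left sum_distrib_right)
  finally show ?thesis .
qed


lemma psd_zero: "psd (\<lambda>x y. 0)"
  unfolding psd_def psd_on_def by simp

lemma psd_rank1: "psd (\<lambda>x y. w x * cnj (w y))"
  using psd_sum_rank1[of "\<lambda>_. w" "{()}"] by simp

lemma qf_mid: fixes v :: "'i::finite \<Rightarrow> complex" shows "qf UNIV mid v = complex_of_real (\<Sum>x\<in>UNIV. (cmod (v x))\<^sup>2)"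
proof -
  have "qf UNIV mid v = (\<Sum>x\<in>UNIV. cnj (v x) * v x)"
    unfolding qf_def mid_def
  proof (intro sum.cong refl)
    fix x
    have "(\<Sum>y\<in>UNIV. cnj (v x) * (if x = y then 1 else 0) * v y) = (\<Sum>y\<in>UNIV. if x = y then cnj (v x) * v y else 0)"
      by (intro sum.cong refl) auto
    also have "\<dots> = cnj (v x) * v x" by (subst sum.delta') (auto simp only: UNIV_I if_True finite)
    finally show "(\<Sum>y\<in>UNIV. cnj (v x) * (if x = y then 1 else 0) * v y) = cnj (v x) * v x" .
  qed
  also have "\<dots> = (\<Sum>x\<in>UNIV. complex_of_real ((cmod (v x))\<^sup>2))"
    by (intro sum.cong refl) (subst complex_norm_square, simp add: mult.commute)
  finally show ?thesis by simp
qed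

lemma psd_mid: "psd (mid :: ('i::finite,'i) cmat)"
  unfolding psd_def psd_on_qf qf_mid by (intro allI of_real_nonneg_c sum_nonneg) simp

lemma psd_comb:
  assumes "psd A" "psd B" "0 \<le> u" "0 \<le> v"
  shows "psd (\<lambda>x y. complex_of_real u * A x y + complex_of_real v * B x y)"
  using psd_add[OF psd_scale[OF assms(1,3)] psd_scale[OF assms(2,4)]] unfolding madd_def .

lemma mtr_psd_nonneg: "psd X \<Longrightarrow> 0 \<le> Re (mtr X)"
  unfolding mtr_def using psd_diag[of X] by (simp add: sum_nonneg nonneg_complex_iff)

lemma ptrR_herm: "ptrR (herm A) = herm (ptrR A)"
  unfolding ptrR_def herm_def by (simp add: fun_eq_iff sum_divide_distrib[symmetric] sum.distrib)

lemma ptrR_mtensor: "ptrR (mtensor M P) = (\<lambda>a' a. mtr M * P a' a)"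
  unfolding ptrR_def mtensor_def mtr_def by (simp add: fun_eq_iff sum_distrib_right)

lemma trace_herm:
  assumes h: "\<And>x y. \<rho> y x = cnj (\<rho> x y)"
  shows "Re (mtr (mmul \<rho> (herm A))) = ip A \<rho>"
proof -
  have "Re (mtr (mmul \<rho> (herm A))) = (\<Sum>x\<in>UNIV. \<Sum>y\<in>UNIV. (Re (\<rho> x y * A y x) + Re (\<rho> x y * cnj (A x y))) / 2)"
    unfolding mtr_def mmul_def herm_def Re_sum by (intro sum.cong refl) (simp add: algebra_simps)
  also have "\<dots> = ((\<Sum>x\<in>UNIV. \<Sum>y\<in>UNIV. Re (\<rho> x y * A y x)) + (\<Sum>x\<in>UNIV. \<Sum>y\<in>UNIV. Re (\<rho> x y * cnj (A x y)))) / 2"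
    by (simp add: sum.distrib sum_divide_distrib[symmetric])
  also have "(\<Sum>x\<in>UNIV. \<Sum>y\<in>UNIV. Re (\<rho> x y * A y x)) = (\<Sum>y\<in>UNIV. \<Sum>x\<in>UNIV. Re (\<rho> x y * A y x))"
    by (rule sum.swap)
  also have "\<dots> = (\<Sum>y\<in>UNIV. \<Sum>x\<in>UNIV. Re (\<rho> y x * cnj (A y x)))"
  proof (intro sum.cong refl)
    fix y x
    have "\<rho> x y * A y x = cnj (\<rho> y x * cnj (A y x))" using h[of y x] by simp
    then show "Re (\<rho> x y * A y x) = Re (\<rho> y x * cnj (A y x))" by (simp only: re_cnj)
  qed
  also have "(\<Sum>y\<in>UNIV. \<Sum>x\<in>UNIV. Re (\<rho> y x * cnj (A y x))) = ip A \<rho>"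
    unfolding ip_def by (simp add: mult.commute)
  finally show ?thesis unfolding ip_def by (simp add: mult.commute)
qed

lemma psd_hermitian: "psd A \<Longrightarrow> A y x = cnj (A x y)"
  by (rule psd_herm)


lemma lin_nonpos:
  fixes c d b :: real
  assumes "\<And>t. 0 \<le> t \<Longrightarrow> t * c + d \<le> b" shows "c \<le> 0"
proof (rule ccontr)
  assume "\<not> c \<le> 0"
  then have c: "c > 0" by simp
  define t where "t = (\<bar>b\<bar> + \<bar>d\<bar> + 1) / c"
  have "t * c = \<bar>b\<bar> + \<bar>d\<bar> + 1" unfolding t_def using c by simp
  moreover have "0 \<le> t" unfolding t_def using c by simp
  ultimately show False using assms[of t] by linarith
qed

lemma lin_nonneg:
  fixes c d b :: real
  assumes "\<And>t. 0 \<le> t \<Longrightarrow> b \<le> t * c + d" shows "0 \<le> c"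
  using lin_nonpos[of "- c" "- d" "- b"] assms by force

lemma eps_lemma:
  fixes b c lam :: real
  assumes "\<And>e. 0 < e \<Longrightarrow> b \<le> c + lam * e" "0 \<le> lam" shows "b \<le> c"
proof (rule ccontr)
  assume "\<not> b \<le> c"
  then have bc: "b - c > 0" by simp
  define e where "e = (b - c) / (lam + 1)"
  have e: "e > 0" unfolding e_def using bc assms(2) by simp
  have "lam * e < b - c"
  proof -
    have "lam * e = (b - c) * (lam / (lam + 1))" unfolding e_def by simp
    also have "\<dots> < (b - c) * 1" using bc assms(2) by (intro mult_strict_left_mono) auto
    finally show ?thesis by simp
  qed
  then show False using assms(1)[OF e] by linarith
qed

lemma comb_lt:
  fixes a1 a2 s1 s2 u v :: real
  assumes "a1 < s1" "a2 < s2" "0 \<le> u" "0 \<le> v" "u + v = 1"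
  shows "u * a1 + v * a2 < u * s1 + v * s2"
proof (cases "u = 0")
  case True then show ?thesis using assms by simp
next
  case False
  then have "u * a1 < u * s1" using assms by simp
  moreover have "v * a2 \<le> v * s2" using assms by (simp add: mult_left_mono)
  ultimately show ?thesis by simp
qed

lemma qf_lin: "qf S (\<lambda>x y. c * M x y + d * N x y) w = c * qf S M w + d * qf S N w"
  unfolding qf_def by (simp add: algebra_simps sum.distrib sum_distrib_left)

lemma qf_neg: "qf S (\<lambda>x y. - M x y) w = - qf S M w"
  unfolding qf_def by (simp add: sum_negf)

lemma mtensor_scale: "mtensor M (\<lambda>x y. c * X x y) = (\<lambda>p q. c * mtensor M X p q)"
  unfolding mtensor_def by (auto simp: fun_eq_iff)

lemma mtr_rank1: "mtr (\<lambda>x y. w x * cnj (w y)) = complex_of_real (\<Sum>x\<in>UNIV. (cmod (w x))\<^sup>2)"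
  unfolding mtr_def of_real_sum by (intro sum.cong refl) (rule complex_norm_square[symmetric])

lemma mtr_scale: "mtr (\<lambda>x y. c * X x y) = c * mtr X"
  unfolding mtr_def by (simp add: sum_distrib_left)

lemma mtr_comb: "mtr (\<lambda>x y. c * X x y + d * Z x y) = c * mtr X + d * mtr Z"
  unfolding mtr_def by (simp add: sum_distrib_left sum.distrib)

lemma inner_pair_real: "inner (av, lam) (v, s) = inner av v + lam * (s::real)"
  by (simp add: inner_prod_def)


lemma hcomb: "herm (tomat (u *\<^sub>R vx + v *\<^sub>R vy)) =
      (\<lambda>i j. complex_of_real u * herm (tomat vx) i j + complex_of_real v * herm (tomat vy) i j)"
  by (simp add: tomat_add tomat_scaleR herm_add herm_scale)

lemma convex_T:
  "convex {z :: (complex ^ (('i::finite) \<times> 'i)) \<times> real. psd (herm (tomat (fst z))) \<and> snd z \<le> p}"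
  unfolding convex_def
proof (intro ballI allI impI)
  fix x y :: "(complex ^ ('i \<times> 'i)) \<times> real" and u v :: real
  assume x: "x \<in> {z. psd (herm (tomat (fst z))) \<and> snd z \<le> p}" and y: "y \<in> {z. psd (herm (tomat (fst z))) \<and> snd z \<le> p}"
    and uv: "0 \<le> u" "0 \<le> v" "u + v = 1"
  have "psd (herm (tomat (u *\<^sub>R fst x + v *\<^sub>R fst y)))"
    unfolding hcomb using x y uv by (intro psd_comb) auto
  moreover have "u * snd x + v * snd y \<le> p" using x y uv by (intro convex_bound_le) auto
  ultimately show "u *\<^sub>R x + v *\<^sub>R y \<in> {z. psd (herm (tomat (fst z))) \<and> snd z \<le> p}" by simp
qed

lemma convex_C:
  fixes \<rho> :: "('b::finite \<times> 'a::finite, 'b \<times> 'a) cmat"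
  shows "convex {z :: (complex ^ (('b \<times> 'a) \<times> ('b \<times> 'a))) \<times> real. \<exists>X. psd X \<and>
     psd (msub (msub (mtensor (mid::('b,'b) cmat) X) \<rho>) (herm (tomat (fst z)))) \<and> Re (mtr X) < snd z}"
  (is "convex ?C")
  unfolding convex_def
proof (intro ballI allI impI)
  fix x y :: "(complex ^ (('b \<times> 'a) \<times> ('b \<times> 'a))) \<times> real" and u v :: real
  assume x: "x \<in> ?C" and y: "y \<in> ?C" and uv: "0 \<le> u" "0 \<le> v" "u + v = 1"
  obtain X1 where X1: "psd X1" "psd (msub (msub (mtensor (mid::('b,'b) cmat) X1) \<rho>) (herm (tomat (fst x))))"
    "Re (mtr X1) < snd x" using x by blast
  obtain X2 where X2: "psd X2" "psd (msub (msub (mtensor (mid::('b,'b) cmat) X2) \<rho>) (herm (tomat (fst y))))"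
    "Re (mtr X2) < snd y" using y by blast
  define X where "X = (\<lambda>i j. complex_of_real u * X1 i j + complex_of_real v * X2 i j)"
  have uv1: "complex_of_real u + complex_of_real v = 1" using uv by (metis of_real_1 of_real_add)
  have pX: "psd X" unfolding X_def using X1(1) X2(1) uv by (intro psd_comb) auto
  have eq: "msub (msub (mtensor (mid::('b,'b) cmat) X) \<rho>) (herm (tomat (u *\<^sub>R fst x + v *\<^sub>R fst y))) =
     (\<lambda>i j. complex_of_real u * msub (msub (mtensor (mid::('b,'b) cmat) X1) \<rho>) (herm (tomat (fst x))) i j
          + complex_of_real v * msub (msub (mtensor (mid::('b,'b) cmat) X2) \<rho>) (herm (tomat (fst y))) i j)"
  proof (intro ext)
    fix i j :: "'b \<times> 'a"
    obtain b1 a1 where i: "i = (b1, a1)" by (cases i)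
    obtain b2 a2 where j: "j = (b2, a2)" by (cases j)
    let ?h1 = "herm (tomat (fst x)) i j" and ?h2 = "herm (tomat (fst y)) i j"
    let ?u = "complex_of_real u" and ?v = "complex_of_real v"
    have "msub (msub (mtensor (mid::('b,'b) cmat) X) \<rho>) (herm (tomat (u *\<^sub>R fst x + v *\<^sub>R fst y))) i j
       = mid b1 b2 * (?u * X1 a1 a2 + ?v * X2 a1 a2) - (?u + ?v) * \<rho> i j - (?u * ?h1 + ?v * ?h2)"
      unfolding hcomb msub_def X_def i j mtensor_apply uv1 by simp
    also have "\<dots> = ?u * (mid b1 b2 * X1 a1 a2 - \<rho> i j - ?h1) + ?v * (mid b1 b2 * X2 a1 a2 - \<rho> i j - ?h2)"
      by (simp add: algebra_simps)
    also have "\<dots> = complex_of_real u * msub (msub (mtensor (mid::('b,'b) cmat) X1) \<rho>) (herm (tomat (fst x))) i j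
          + complex_of_real v * msub (msub (mtensor (mid::('b,'b) cmat) X2) \<rho>) (herm (tomat (fst y))) i j"
      unfolding msub_def i j mtensor_apply ..
    finally show "msub (msub (mtensor (mid::('b,'b) cmat) X) \<rho>) (herm (tomat (u *\<^sub>R fst x + v *\<^sub>R fst y))) i j =
       complex_of_real u * msub (msub (mtensor (mid::('b,'b) cmat) X1) \<rho>) (herm (tomat (fst x))) i j
          + complex_of_real v * msub (msub (mtensor (mid::('b,'b) cmat) X2) \<rho>) (herm (tomat (fst y))) i j" .
  qed
  have pM: "psd (msub (msub (mtensor (mid::('b,'b) cmat) X) \<rho>) (herm (tomat (u *\<^sub>R fst x + v *\<^sub>R fst y))))"
    unfolding eq using X1(2) X2(2) uv by (intro psd_comb) auto
  have "Re (mtr X) = u * Re (mtr X1) + v * Re (mtr X2)" unfolding X_def mtr_comb by simp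
  also have "\<dots> < u * snd x + v * snd y" using X1(3) X2(3) uv by (intro comb_lt) auto
  finally have "Re (mtr X) < u * snd x + v * snd y" .
  then show "u *\<^sub>R x + v *\<^sub>R y \<in> ?C" using pX pM by auto
qed


lemma strong_dual_sep:
  fixes \<rho> :: "('b::finite \<times> 'a::finite, 'b \<times> 'a) cmat"
  assumes pr: "psd \<rho>"
    and X0: "psd X0" "psd (msub (mtensor (mid::('b,'b) cmat) X0) \<rho>)"
    and low: "\<And>X. psd X \<Longrightarrow> psd (msub (mtensor (mid::('b,'b) cmat) X) \<rho>) \<Longrightarrow> p \<le> Re (mtr X)"
  shows "\<exists>(A :: ('b \<times> 'a, 'b \<times> 'a) cmat) lam b. (A \<noteq> (\<lambda>x y. 0) \<or> lam \<noteq> 0) \<and>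
     (\<forall>v s. psd (herm v) \<longrightarrow> s \<le> p \<longrightarrow> ip A v + lam * s \<le> b) \<and>
     (\<forall>v s X. psd X \<longrightarrow> psd (msub (msub (mtensor (mid::('b,'b) cmat) X) \<rho>) (herm v)) \<longrightarrow> Re (mtr X) < s \<longrightarrow> b \<le> ip A v + lam * s)"
proof -
  define T :: "((complex ^ (('b \<times> 'a) \<times> ('b \<times> 'a))) \<times> real) set"
    where "T = {z. psd (herm (tomat (fst z))) \<and> snd z \<le> p}"
  define C :: "((complex ^ (('b \<times> 'a) \<times> ('b \<times> 'a))) \<times> real) set"
    where "C = {z. \<exists>X. psd X \<and> psd (msub (msub (mtensor (mid::('b,'b) cmat) X) \<rho>) (herm (tomat (fst z)))) \<and> Re (mtr X) < snd z}"
  have cT: "convex T" unfolding T_def by (rule convex_T)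
  have cC: "convex C" unfolding C_def by (rule convex_C)
  have h0: "herm (tomat 0) = (\<lambda>x y. 0)" by (simp add: herm_zero)
  have nT: "T \<noteq> {}"
  proof -
    have "(0, p) \<in> T" unfolding T_def by (simp add: herm_zero psd_zero)
    then show ?thesis by blast
  qed
  have nC: "C \<noteq> {}"
  proof -
    have "msub (msub (mtensor (mid::('b,'b) cmat) X0) \<rho>) (herm (tomat 0)) = msub (mtensor (mid::('b,'b) cmat) X0) \<rho>"
      unfolding h0 msub_def by simp
    then have "(0, Re (mtr X0) + 1) \<in> C" unfolding C_def using X0 by auto
    then show ?thesis by blast
  qed
  have dTC: "T \<inter> C = {}"
  proof (rule ccontr)
    assume "T \<inter> C \<noteq> {}"
    then obtain z where zT: "z \<in> T" and zC: "z \<in> C" by blast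
    obtain X where X: "psd X" "psd (msub (msub (mtensor (mid::('b,'b) cmat) X) \<rho>) (herm (tomat (fst z))))"
      "Re (mtr X) < snd z" using zC unfolding C_def by blast
    have "psd (madd (msub (msub (mtensor (mid::('b,'b) cmat) X) \<rho>) (herm (tomat (fst z)))) (herm (tomat (fst z))))"
      using X(2) zT unfolding T_def by (intro psd_add) auto
    moreover have "madd (msub (msub (mtensor (mid::('b,'b) cmat) X) \<rho>) (herm (tomat (fst z)))) (herm (tomat (fst z)))
        = msub (mtensor (mid::('b,'b) cmat) X) \<rho>" unfolding madd_def msub_def by simp
    ultimately have "p \<le> Re (mtr X)" using low X(1) by simp
    then show False using X(3) zT unfolding T_def by simp
  qed
  obtain a b where a0: "a \<noteq> 0" and aT: "\<forall>z\<in>T. inner a z \<le> b" and aC: "\<forall>z\<in>C. b \<le> inner a z"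
    using separating_hyperplane_sets[OF cT cC nT nC dTC] by blast
  obtain av lam where a: "a = (av, lam)" by (cases a)
  define A where "A = tomat av"
  have nz: "A \<noteq> (\<lambda>x y. 0) \<or> lam \<noteq> 0"
  proof (rule ccontr)
    assume "\<not> (A \<noteq> (\<lambda>x y. 0) \<or> lam \<noteq> 0)"
    then have "av = 0" "lam = 0" using tomat_eq_zero unfolding A_def by auto
    then show False using a0 unfolding a by (simp add: zero_prod_def)
  qed
  have IT: "ip A v + lam * s \<le> b" if "psd (herm v)" "s \<le> p" for v s
  proof -
    have "(frommat v, s) \<in> T" unfolding T_def using that by simp
    then show ?thesis using aT unfolding a A_def by (force simp: inner_pair_real inner_tomat)
  qed
  have IC: "b \<le> ip A v + lam * s"
    if "psd X" "psd (msub (msub (mtensor (mid::('b,'b) cmat) X) \<rho>) (herm v))" "Re (mtr X) < s" for v s X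
  proof -
    have "(frommat v, s) \<in> C" unfolding C_def using that by auto
    then show ?thesis using aC unfolding a A_def by (force simp: inner_pair_real inner_tomat)
  qed
  show ?thesis using nz IT IC by blast
qed


lemma feas_herm:
  assumes "psd \<rho>" "psd X"
  shows "msub (mtensor (mid::('b::finite,'b) cmat) X) \<rho> y x = cnj (msub (mtensor (mid::('b,'b) cmat) X) \<rho> x y)"
proof -
  obtain b1 a1 where x: "x = (b1, a1)" by (cases x)
  obtain b2 a2 where y: "y = (b2, a2)" by (cases y)
  have "mtensor (mid::('b,'b) cmat) X y x = cnj (mtensor (mid::('b,'b) cmat) X x y)"
    using psd_herm[OF assms(2), of a1 a2] unfolding mtensor_def mid_def x y by auto
  then show ?thesis using psd_herm[OF assms(1), of x y] unfolding msub_def by simp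
qed

lemma ptrR_neg: "ptrR (\<lambda>x y. - Z x y) = (\<lambda>x y. - ptrR Z x y)"
  unfolding ptrR_def by (simp add: sum_negf)

lemma ptrR_scale: "ptrR (\<lambda>x y. c * Z x y) = (\<lambda>x y. c * ptrR Z x y)"
  unfolding ptrR_def by (simp add: sum_distrib_left)

lemma ptrR_madd: "ptrR (madd Y Z) = (\<lambda>x y. ptrR Y x y + ptrR Z x y)"
  unfolding ptrR_def madd_def by (simp add: sum.distrib)

lemma mtr_mmul_neg: "mtr (mmul \<rho> (\<lambda>x y. - Z x y)) = - mtr (mmul \<rho> Z)"
  unfolding mtr_def mmul_def by (simp add: sum_negf)

lemma mtr_mmul_scale: "mtr (mmul \<rho> (\<lambda>x y. c * Z x y)) = c * mtr (mmul \<rho> Z)"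
  unfolding mtr_def mmul_def by (simp add: sum_distrib_left mult_ac)

lemma mtr_mmul_madd: "mtr (mmul \<rho> (madd Y Z)) = mtr (mmul \<rho> Y) + mtr (mmul \<rho> Z)"
  unfolding mtr_def mmul_def madd_def by (simp add: distrib_left sum.distrib)

lemma mtr_mid: "mtr (mid :: ('i::finite,'i) cmat) = of_nat (card (UNIV :: 'i set))"
  unfolding mtr_def mid_def by simp

lemma ip_self: "ip A A = (\<Sum>x\<in>UNIV. \<Sum>y\<in>UNIV. (Re (A x y))\<^sup>2 + (Im (A x y))\<^sup>2)"
  unfolding ip_def by (intro sum.cong refl) (simp add: power2_eq_square)

lemma ip_self_zero:
  assumes "ip A A \<le> 0" shows "A = (\<lambda>x y. 0)"
proof -
  have nn: "\<And>x y. 0 \<le> (Re (A x y))\<^sup>2 + (Im (A x y))\<^sup>2" by simp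
  have s0: "(\<Sum>x\<in>UNIV. \<Sum>y\<in>UNIV. (Re (A x y))\<^sup>2 + (Im (A x y))\<^sup>2) = 0"
    using assms unfolding ip_self by (meson antisym sum_nonneg nn)
  have "\<forall>x\<in>UNIV. (\<Sum>y\<in>UNIV. (Re (A x y))\<^sup>2 + (Im (A x y))\<^sup>2) = 0"
    using s0 by (subst sum_nonneg_eq_0_iff[symmetric]) (auto intro: sum_nonneg)
  then have "\<forall>x y. (Re (A x y))\<^sup>2 + (Im (A x y))\<^sup>2 = 0"
    by (subst (asm) sum_nonneg_eq_0_iff) auto
  then show ?thesis by (auto simp: fun_eq_iff complex_eq_iff add_nonneg_eq_0_iff)
qed

lemma herm_rank1: "herm (\<lambda>x y. complex_of_real t * (w x * cnj (w y))) = (\<lambda>x y. complex_of_real t * (w x * cnj (w y)))"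
  by (rule herm_id) simp


lemma dual_from_sep:
  fixes \<rho> A :: "('b::finite \<times> 'a::finite, 'b \<times> 'a) cmat"
  assumes pr: "psd \<rho>"
    and nz: "A \<noteq> (\<lambda>x y. 0) \<or> lam \<noteq> 0"
    and IT: "\<And>v s. psd (herm v) \<Longrightarrow> s \<le> p \<Longrightarrow> ip A v + lam * s \<le> b"
    and IC: "\<And>v s X. psd X \<Longrightarrow> psd (msub (msub (mtensor (mid::('b,'b) cmat) X) \<rho>) (herm v)) \<Longrightarrow> Re (mtr X) < s \<Longrightarrow> b \<le> ip A v + lam * s"
  shows "\<exists>Y. psd Y \<and> ptrR Y = mid \<and> p \<le> Re (mtr (mmul \<rho> Y))"
proof -
  have hr: "\<And>x y. \<rho> y x = cnj (\<rho> x y)" using psd_herm[OF pr] by blast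
  define H where "H = herm A"
  define Y0 where "Y0 = (\<lambda>x y. - H x y)"
  have D1: "0 \<le> lam"
  proof -
    have "ip A (\<lambda>x y. 0) + lam * (p - r) \<le> b" if "0 \<le> r" for r
      using that by (intro IT) (auto simp: herm_zero psd_zero)
    then have "r * (- lam) + lam * p \<le> b" if "0 \<le> r" for r using that by (simp add: ip_zero2 algebra_simps, metis mult.commute)
    then show ?thesis using lin_nonpos[of "- lam" "lam * p" b] by simp
  qed
  have D2: "lam * p \<le> b"
    using IT[of "\<lambda>x y. 0" p] by (simp add: herm_zero psd_zero ip_zero2)
  have D3: "psd Y0"
    unfolding psd_def psd_on_qf
  proof
    fix w :: "'b \<times> 'a \<Rightarrow> complex"
    have "ip A (\<lambda>x y. complex_of_real t * (w x * cnj (w y))) + lam * p \<le> b" if "0 \<le> t" for t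
      using that by (intro IT) (simp_all add: herm_rank1 psd_scale psd_rank1)
    then have "t * Re (qf UNIV A w) + lam * p \<le> b" if "0 \<le> t" for t
      using that by (simp add: ip_scale2 ip_rank1)
    then have "Re (qf UNIV A w) \<le> 0" by (rule lin_nonpos)
    moreover have "qf UNIV Y0 w = complex_of_real (- Re (qf UNIV A w))"
      unfolding Y0_def qf_neg H_def qf_herm by simp
    ultimately show "0 \<le> qf UNIV Y0 w" by (simp add: less_eq_complex_def)
  qed
  have D4a: "b \<le> - ip A \<rho>"
  proof (rule eps_lemma[OF _ D1])
    fix e :: real assume e: "0 < e"
    let ?v = "msub (mtensor (mid::('b,'b) cmat) (\<lambda>x y. 0)) \<rho>"
    have v: "?v = (\<lambda>x y. - \<rho> x y)" unfolding msub_def mtensor_def by (auto simp: fun_eq_iff)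
    have hv: "herm ?v = ?v" by (rule herm_id) (rule feas_herm[OF pr psd_zero])
    have "b \<le> ip A ?v + lam * e"
    proof (rule IC[OF psd_zero])
      show "psd (msub (msub (mtensor (mid::('b,'b) cmat) (\<lambda>x y. 0)) \<rho>) (herm ?v))"
        unfolding hv unfolding msub_def by (simp add: psd_zero)
      show "Re (mtr (\<lambda>x y. 0 :: complex)) < e" using e by (simp add: mtr_def)
    qed
    moreover have "ip A ?v = - ip A \<rho>"
    proof -
      have "ip A ?v = ip A (\<lambda>x y. complex_of_real (-1) * \<rho> x y)" unfolding v by simp
      then show ?thesis unfolding ip_scale2 by simp
    qed
    ultimately show "b \<le> - ip A \<rho> + lam * e" by simp
  qed
  define N where "N = (\<lambda>w :: 'a \<Rightarrow> complex. \<Sum>x\<in>UNIV. (cmod (w x))\<^sup>2)"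
  define M where "M = (\<lambda>x y. complex_of_real lam * mid x y - ptrR Y0 x y)"
  have D4b: "psd M"
    unfolding psd_def psd_on_qf
  proof
    fix w :: "'a \<Rightarrow> complex"
    have key: "b \<le> t * (Re (qf UNIV (ptrR A) w) + lam * N w) + (- ip A \<rho> + lam)" if t: "0 \<le> t" for t
    proof -
      define X where "X = (\<lambda>x y. complex_of_real t * (w x * cnj (w y)))"
      have pX: "psd X" unfolding X_def using t by (intro psd_scale psd_rank1)
      let ?v = "msub (mtensor (mid::('b,'b) cmat) X) \<rho>"
      have hv: "herm ?v = ?v" by (rule herm_id) (rule feas_herm[OF pr pX])
      have trX: "Re (mtr X) = t * N w" unfolding X_def mtr_scale mtr_rank1 N_def by simp
      have "b \<le> ip A ?v + lam * (Re (mtr X) + 1)"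
      proof (rule IC[OF pX])
        show "psd (msub (msub (mtensor (mid::('b,'b) cmat) X) \<rho>) (herm ?v))"
          unfolding hv unfolding msub_def by (simp add: psd_zero)
      qed simp
      moreover have "ip A ?v = t * Re (qf UNIV (ptrR A) w) - ip A \<rho>"
      proof -
        have e1: "ip A ?v = ip A (mtensor (mid::('b,'b) cmat) X) - ip A \<rho>" unfolding msub_def ip_sub2 ..
        have e2: "mtensor (mid::('b,'b) cmat) X = (\<lambda>p q. complex_of_real t * mtensor (mid::('b,'b) cmat) (\<lambda>x y. w x * cnj (w y)) p q)"
          unfolding X_def mtensor_scale ..
        have e3: "ip A (mtensor (mid::('b,'b) cmat) X) = t * Re (qf UNIV (ptrR A) w)"
          unfolding e2 ip_scale2 ip_tensor_rank1 ..
        show ?thesis using e1 e3 by simp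
      qed
      ultimately show ?thesis unfolding trX by (simp add: algebra_simps)
    qed
    have nn: "0 \<le> Re (qf UNIV (ptrR A) w) + lam * N w" using key by (rule lin_nonneg)
    have "qf UNIV M w = complex_of_real lam * qf UNIV mid w - qf UNIV (ptrR Y0) w"
      unfolding M_def qf_def by (simp add: algebra_simps sum_subtractf sum_distrib_left)
    also have "qf UNIV (ptrR Y0) w = - complex_of_real (Re (qf UNIV (ptrR A) w))"
      unfolding Y0_def ptrR_neg qf_neg H_def ptrR_herm qf_herm ..
    also have "qf UNIV mid w = complex_of_real (N w)" unfolding qf_mid N_def ..
    finally have "qf UNIV M w = complex_of_real (Re (qf UNIV (ptrR A) w) + lam * N w)" by simp
    then show "0 \<le> qf UNIV M w" using nn by (simp add: less_eq_complex_def)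
  qed
  have D5: "Re (mtr (mmul \<rho> Y0)) = - ip A \<rho>"
    unfolding Y0_def mtr_mmul_neg H_def using trace_herm[OF hr] by simp
  have lampos: "lam > 0"
  proof (rule ccontr)
    assume "\<not> lam > 0"
    then have l0: "lam = 0" using D1 by simp
    have pM: "psd (\<lambda>x y. - ptrR Y0 x y)" using D4b unfolding M_def l0 by simp
    have diag0: "Y0 x x = 0" for x
    proof -
      obtain bb aa where x: "x = (bb, aa)" by (cases x)
      have "0 \<le> - ptrR Y0 aa aa" using psd_diag[OF pM] .
      then have le: "Re (ptrR Y0 aa aa) \<le> 0" by (simp add: nonneg_complex_iff)
      have nnb: "\<And>b'. 0 \<le> Re (Y0 (b', aa) (b', aa))" using psd_diag[OF D3] by (simp add: nonneg_complex_iff)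
      have "(\<Sum>b'\<in>UNIV. Re (Y0 (b', aa) (b', aa))) = 0"
        using le nnb unfolding ptrR_def Re_sum by (meson antisym sum_nonneg)
      then have "Re (Y0 (bb, aa) (bb, aa)) = 0" using nnb by (subst (asm) sum_nonneg_eq_0_iff) auto
      moreover have "Im (Y0 (bb, aa) (bb, aa)) = 0" using psd_diag[OF D3] by (simp add: nonneg_complex_iff)
      ultimately show ?thesis unfolding x by (simp add: complex_eq_iff)
    qed
    have "Y0 x y = 0" for x y
      using psd_on_zero_row[of UNIV Y0 x y] D3 diag0 unfolding psd_def by simp
    then have H0: "H = (\<lambda>x y. 0)" unfolding Y0_def by (auto simp: fun_eq_iff)
    have "t * ip A A + lam * p \<le> b" if "0 \<le> t" for t
    proof -
      have "herm (\<lambda>x y. complex_of_real t * A x y) = (\<lambda>x y. 0)"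
        unfolding herm_scale H0[unfolded H_def] by simp
      then have "ip A (\<lambda>x y. complex_of_real t * A x y) + lam * p \<le> b"
        by (intro IT) (simp_all add: psd_zero)
      then show ?thesis by (simp add: ip_scale2)
    qed
    then have "ip A A \<le> 0" by (rule lin_nonpos)
    then have "A = (\<lambda>x y. 0)" by (rule ip_self_zero)
    then show False using nz l0 by simp
  qed
  define Y1 where "Y1 = (\<lambda>x y. complex_of_real (1 / lam) * Y0 x y)"
  have pY1: "psd Y1" unfolding Y1_def using D3 lampos by (intro psd_scale) auto
  define P where "P = (\<lambda>x y. mid x y - ptrR Y1 x y)"
  have PM: "P = (\<lambda>x y. complex_of_real (1 / lam) * M x y)"
    unfolding P_def M_def Y1_def ptrR_scale using lampos by (auto simp: fun_eq_iff algebra_simps)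
  have pP: "psd P" unfolding PM using D4b lampos by (intro psd_scale) auto
  have trY1: "p \<le> Re (mtr (mmul \<rho> Y1))"
  proof -
    have "Re (mtr (mmul \<rho> Y1)) = (1 / lam) * Re (mtr (mmul \<rho> Y0))"
      unfolding Y1_def mtr_mmul_scale by simp
    also have "\<dots> = (1 / lam) * (- ip A \<rho>)" unfolding D5 ..
    finally have e: "Re (mtr (mmul \<rho> Y1)) = (1 / lam) * (- ip A \<rho>)" .
    have "lam * p \<le> - ip A \<rho>" using D2 D4a by simp
    then have "p \<le> (1 / lam) * (- ip A \<rho>)" using lampos by (simp add: field_simps)
    then show ?thesis unfolding e .
  qed
  define c where "c = 1 / real (card (UNIV :: 'b set))"
  define Z where "Z = mtensor (\<lambda>x y. complex_of_real c * (mid::('b,'b) cmat) x y) P"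
  define Y2 where "Y2 = madd Y1 Z"
  have pZ: "psd Z" unfolding Z_def using pP by (intro psd_mtensor psd_scale psd_mid) (simp add: c_def)
  have pY2: "psd Y2" unfolding Y2_def using pY1 pZ by (rule psd_add)
  have trc: "mtr (\<lambda>x y. complex_of_real c * (mid::('b,'b) cmat) x y) = 1"
    unfolding mtr_scale mtr_mid c_def by simp
  have ptY2: "ptrR Y2 = mid"
    unfolding Y2_def ptrR_madd Z_def ptrR_mtensor trc P_def by simp
  have "Re (mtr (mmul \<rho> Y2)) = Re (mtr (mmul \<rho> Y1)) + Re (mtr (mmul \<rho> Z))"
    unfolding Y2_def mtr_mmul_madd by simp
  moreover have "0 \<le> Re (mtr (mmul \<rho> Z))"
    using mtr_mmul_psd[OF pr pZ] by (simp add: nonneg_complex_iff)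
  ultimately have "p \<le> Re (mtr (mmul \<rho> Y2))" using trY1 by simp
  then show ?thesis using pY2 ptY2 by blast
qed


lemma qf_bound:
  fixes M :: "('i::finite,'i) cmat"
  shows "Re (qf UNIV M v) \<le> (\<Sum>x\<in>UNIV. \<Sum>y\<in>UNIV. cmod (M x y)) * (\<Sum>z\<in>UNIV. (cmod (v z))\<^sup>2)"
proof -
  define N where "N = (\<Sum>z\<in>UNIV. (cmod (v z))\<^sup>2)"
  have vN: "(cmod (v x))\<^sup>2 \<le> N" for x
    unfolding N_def by (rule member_le_sum) auto
  have prod: "cmod (v x) * cmod (v y) \<le> N" for x y
  proof -
    have "2 * (cmod (v x) * cmod (v y)) \<le> (cmod (v x))\<^sup>2 + (cmod (v y))\<^sup>2"
      using sum_squares_bound[of "cmod (v x)" "cmod (v y)"] by (simp add: power2_eq_square algebra_simps)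
    then show ?thesis using vN[of x] vN[of y] by linarith
  qed
  have "Re (qf UNIV M v) \<le> cmod (qf UNIV M v)" by (rule complex_Re_le_cmod)
  also have "\<dots> \<le> (\<Sum>x\<in>UNIV. \<Sum>y\<in>UNIV. cmod (cnj (v x) * M x y * v y))"
    unfolding qf_def by (rule order_trans[OF norm_sum sum_mono]) (rule norm_sum)
  also have "\<dots> \<le> (\<Sum>x\<in>UNIV. \<Sum>y\<in>UNIV. cmod (M x y) * N)"
  proof (intro sum_mono)
    fix x y
    have "cmod (cnj (v x) * M x y * v y) = cmod (M x y) * (cmod (v x) * cmod (v y))"
      by (simp add: norm_mult)
    also have "\<dots> \<le> cmod (M x y) * N" by (rule mult_left_mono[OF prod]) simp
    finally show "cmod (cnj (v x) * M x y * v y) \<le> cmod (M x y) * N" .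
  qed
  also have "\<dots> = (\<Sum>x\<in>UNIV. \<Sum>y\<in>UNIV. cmod (M x y)) * N" by (simp add: sum_distrib_right)
  finally show ?thesis unfolding N_def .
qed

lemma feasible_exists:
  fixes \<rho> :: "('b::finite \<times> 'a::finite, 'b \<times> 'a) cmat"
  assumes pr: "psd \<rho>"
  shows "\<exists>X. psd X \<and> psd (msub (mtensor (mid::('b,'b) cmat) X) \<rho>)"
proof -
  define c where "c = (\<Sum>x\<in>UNIV. \<Sum>y\<in>UNIV. cmod (\<rho> x y))"
  have c0: "0 \<le> c" unfolding c_def by (intro sum_nonneg) auto
  define X where "X = (\<lambda>x y. complex_of_real c * (mid :: ('a,'a) cmat) x y)"
  have pX: "psd X" unfolding X_def using c0 by (intro psd_scale psd_mid)
  have eq: "msub (mtensor (mid::('b,'b) cmat) X) \<rho> = (\<lambda>x y. complex_of_real c * mid x y + (-1) * \<rho> x y)"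
    unfolding X_def mtensor_scale mtensor_mid msub_def by simp
  have "psd (msub (mtensor (mid::('b,'b) cmat) X) \<rho>)"
    unfolding eq psd_def psd_on_qf
  proof
    fix v :: "'b \<times> 'a \<Rightarrow> complex"
    have q: "qf UNIV (\<lambda>x y. complex_of_real c * mid x y + (-1) * \<rho> x y) v = complex_of_real c * qf UNIV mid v - qf UNIV \<rho> v"
      unfolding qf_lin by simp
    have r: "0 \<le> qf UNIV \<rho> v" using pr unfolding psd_def psd_on_qf by blast
    have "Re (qf UNIV \<rho> v) \<le> c * (\<Sum>z\<in>UNIV. (cmod (v z))\<^sup>2)" unfolding c_def by (rule qf_bound)
    then show "0 \<le> qf UNIV (\<lambda>x y. complex_of_real c * mid x y + (-1) * \<rho> x y) v"
      unfolding q qf_mid using r by (simp add: less_eq_complex_def)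
  qed
  then show ?thesis using pX by blast
qed


theorem lemma5:
  fixes \<mu> :: "'g::topological_group_add measure"
    and UA :: "'g \<Rightarrow> ('a::finite, 'a) cmat"
    and UB :: "'g \<Rightarrow> ('b::finite, 'b) cmat"
    and \<eta> :: "('b, 'b) cmat" and \<tau> :: "('a, 'a) cmat"
  assumes "compact (UNIV :: 'g set)"
    and "haar_prob \<mu>"
    and "cont_unitary_rep UA" and "cont_unitary_rep UB"
    and "is_state \<eta>" and "is_state \<tau>"
  shows "(\<exists>E. quantum_channel E \<and> covariant UA UB E \<and>
            mtr (mmul (mtransp \<eta>) (E \<tau>)) = complex_of_real (Phi \<mu> UA UB \<eta> \<tau>))
       \<and> (\<forall>E. quantum_channel E \<and> covariant UA UB E \<longrightarrow>
            Re (mtr (mmul (mtransp \<eta>) (E \<tau>))) \<le> Phi \<mu> UA UB \<eta> \<tau>)"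
proof -
  note cpt = assms(1) and haar = assms(2) and A = assms(3) and B = assms(4)
  define \<sigma> where "\<sigma> = mtensor \<eta> \<tau>"
  define \<rho> where "\<rho> = twirl \<mu> UA UB \<sigma>"
  have ps: "psd \<sigma>" unfolding \<sigma>_def using assms(5,6) unfolding is_state_def by (intro psd_mtensor) auto
  have pr: "psd \<rho>" unfolding \<rho>_def by (rule twirl_psd[OF cpt haar A B ps])
  define FS where "FS = {Re (mtr X) | X. psd X \<and> psd (msub (mtensor (mid::('b,'b) cmat) X) \<rho>)}"
  have Phi: "Phi \<mu> UA UB \<eta> \<tau> = Inf FS" unfolding Phi_def FS_def \<rho>_def \<sigma>_def ..
  obtain X0 where X0: "psd X0" "psd (msub (mtensor (mid::('b,'b) cmat) X0) \<rho>)"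
    using feasible_exists[OF pr] by blast
  have FSne: "FS \<noteq> {}" unfolding FS_def using X0 by blast
  have bdd: "bdd_below FS" unfolding FS_def bdd_below_def using mtr_psd_nonneg by blast
  have low: "Inf FS \<le> Re (mtr X)" if "psd X" "psd (msub (mtensor (mid::('b,'b) cmat) X) \<rho>)" for X
    using that by (intro cInf_lower[OF _ bdd]) (auto simp: FS_def)
  have weak: "Re (mtr (mmul \<rho> Y)) \<le> Inf FS" if "psd Y" "ptrR Y = mid" for Y
  proof (rule cInf_greatest[OF FSne])
    fix r assume "r \<in> FS"
    then obtain X where X: "r = Re (mtr X)" "psd X" "psd (msub (mtensor (mid::('b,'b) cmat) X) \<rho>)"
      unfolding FS_def by blast
    show "Re (mtr (mmul \<rho> Y)) \<le> r" unfolding X(1) by (rule weak_dual[OF X(3) that])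
  qed
  have part2: "\<forall>E. quantum_channel E \<and> covariant UA UB E \<longrightarrow>
            Re (mtr (mmul (mtransp \<eta>) (E \<tau>))) \<le> Phi \<mu> UA UB \<eta> \<tau>"
  proof (intro allI impI)
    fix E assume E: "quantum_channel E \<and> covariant UA UB E"
    have lin: "linear_map E" and cp: "completely_positive E" and tp: "\<forall>X. mtr (E X) = mtr X"
      using E unfolding quantum_channel_def by auto
    define Y where "Y = choi E"
    have EY: "chan Y = E" unfolding Y_def using chan_choi[OF lin] by (auto simp: fun_eq_iff)
    have pY: "psd Y" unfolding Y_def by (rule choi_psd[OF cp])
    have tY: "ptrR Y = mid" unfolding Y_def by (rule choi_tp[OF tp])
    have inv: "\<And>g. mmul (mmul (Wg UA UB g) Y) (madj (Wg UA UB g)) = Y"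
      using cov_imp_inv[OF A B] E EY by simp
    have "mtr (mmul (mtransp \<eta>) (E \<tau>)) = mtr (mmul \<sigma> Y)"
      unfolding EY[symmetric] \<sigma>_def by (rule mtr_transp_chan)
    also have "\<dots> = mtr (mmul \<rho> Y)" unfolding \<rho>_def by (rule twirl_inv_trace[OF cpt haar A B inv, symmetric])
    finally show "Re (mtr (mmul (mtransp \<eta>) (E \<tau>))) \<le> Phi \<mu> UA UB \<eta> \<tau>"
      unfolding Phi using weak[OF pY tY] by simp
  qed
  obtain Amat lam b where sep:
    "(Amat \<noteq> (\<lambda>x y. 0) \<or> lam \<noteq> 0)"
    "\<forall>v s. psd (herm v) \<longrightarrow> s \<le> Inf FS \<longrightarrow> ip Amat v + lam * s \<le> b"
    "\<forall>v s X. psd X \<longrightarrow> psd (msub (msub (mtensor (mid::('b,'b) cmat) X) \<rho>) (herm v)) \<longrightarrow> Re (mtr X) < s \<longrightarrow> b \<le> ip Amat v + lam * s"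
    using strong_dual_sep[OF pr X0 low] by blast
  obtain Y where Y: "psd Y" "ptrR Y = mid" "Inf FS \<le> Re (mtr (mmul \<rho> Y))"
    using dual_from_sep[OF pr sep(1)] sep(2,3) by blast
  define Y3 where "Y3 = twirlm \<mu> UA UB Y"
  have pY3: "psd Y3" unfolding Y3_def by (rule twirlm_psd[OF cpt haar A B Y(1)])
  have tY3: "ptrR Y3 = mid" unfolding Y3_def by (rule twirlm_ptrR[OF cpt haar A B Y(2)])
  have iY3: "\<And>g. mmul (mmul (Wg UA UB g) Y3) (madj (Wg UA UB g)) = Y3"
    unfolding Y3_def by (rule twirlm_inv[OF cpt haar A B])
  define E where "E = chan Y3"
  have qc: "quantum_channel E"
    unfolding quantum_channel_def E_def using chan_linear chan_cp[OF pY3] chan_tp[OF tY3] by blast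
  have cov: "covariant UA UB E" unfolding E_def by (rule inv_imp_cov[OF A B iY3])
  have val: "mtr (mmul (mtransp \<eta>) (E \<tau>)) = mtr (mmul \<rho> Y)"
  proof -
    have "mtr (mmul (mtransp \<eta>) (E \<tau>)) = mtr (mmul \<sigma> Y3)"
      unfolding E_def \<sigma>_def by (rule mtr_transp_chan)
    also have "\<dots> = mtr (mmul \<rho> Y)" unfolding Y3_def \<rho>_def by (rule twirlm_trace[OF cpt haar A B])
    finally show ?thesis .
  qed
  have im: "Im (mtr (mmul (mtransp \<eta>) (E \<tau>))) = 0"
  proof -
    have "mtr (mmul (mtransp \<eta>) (E \<tau>)) = mtr (mmul \<sigma> Y3)"
      unfolding E_def \<sigma>_def by (rule mtr_transp_chan)
    then show ?thesis using mtr_mmul_psd[OF ps pY3] by (simp add: nonneg_complex_iff)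
  qed
  have le: "Re (mtr (mmul (mtransp \<eta>) (E \<tau>))) \<le> Phi \<mu> UA UB \<eta> \<tau>" using part2 qc cov by blast
  have ge: "Phi \<mu> UA UB \<eta> \<tau> \<le> Re (mtr (mmul (mtransp \<eta>) (E \<tau>)))" unfolding val Phi using Y(3) .
  have "mtr (mmul (mtransp \<eta>) (E \<tau>)) = complex_of_real (Phi \<mu> UA UB \<eta> \<tau>)"
    using le ge im by (simp add: complex_eq_iff)
  then show ?thesis using qc cov part2 by blast
qed

end
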